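(* Let $K\subset\{1,\dots,2d\}$ be nonempty. For each $0\le n^0\le\sharp(K)$ and $0\le n^+\le\sharp(K)-n^0$, with $n^-=\sharp(K)-n^0-n^+$, the set $J^{(n^0,n^+,n^-)}_{\mathcal O_K^{\mathbb C}}$ is path connected.
   Context: Let $d\ge2$. $\mathcal B^{\mathbb C}$ is the quotient of the set of complex $2d\times4d$ matrices $(A\,|\,B)$ with $\operatorname{rank}(A\,|\,B)=2d$, $AB^*=BA^*$ (topology from $\mathbb C^{8d^2}$) by the left action $(A\,|\,B)\mapsto(TA\,|\,TB)$ of $GL(2d,\mathbb C)$, with quotient topology. For $K\subset\{1,\dots,2d\}$, $\mathcal O_K^{\mathbb C}$ is the set of classes $[A\,|\,B]$ having a representative with columns $a_i=-e_i$, $b_i=s_i$ for $i\in K$ and $a_i=s_i$, $b_i=e_i$ for $i\notin K$, where $S=(s_1,\dots,s_{2d})=(s_{lj})$ is a $2d\times2d$ Hermitian matrix (uniquely determined, denoted $S(\mathbf A)$) and $e_i$ are standard basis vectors; it carries the topology from $\mathcal B^{\mathbb C}$. For $K=\{n_1<\dots<n_{m_0}\}$, $S_K(\mathbf A)=(s_{n_in_j})_{i,j=1}^{m_0}$, and $J^{(n^0,n^+,n^-)}_{\mathcal O_K^{\mathbb C}}$ is the set of $\mathbf A\in\mathcal O_K^{\mathbb C}$ such that $S_K(\mathbf A)$ has exactly $n^0$ zero, $n^+$ positive and $n^-$ negative eigenvalues counted with multiplicity. *)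

theory Defs imports "HOL-Analysis.Analysis" "Jordan_Normal_Form.Char_Poly" begin

text \<open>Index set {1..2d} is modelled by a finite linearly ordered type 'n with CARD('n) = 2d.
  Complex 2d x 2d matrices are complex^'n^'n; a 2d x 4d matrix (A|B) is a pair (A,B),
  carrying the Euclidean topology of C^(8d^2).\<close>

definition adj_mat :: "complex^'n^'m \<Rightarrow> complex^'m^'n" where
  "adj_mat M = (\<chi> i j. cnj (M $ j $ i))"

definition hermitian_mat :: "complex^'n^'n \<Rightarrow> bool" where
  "hermitian_mat S \<longleftrightarrow> adj_mat S = S"

definition block_mat :: "complex^'n^'m \<Rightarrow> complex^'n^'m \<Rightarrow> complex^('n + 'n)^'m" where
  "block_mat A B = (\<chi> l j. case j of Inl i \<Rightarrow> A $ l $ i | Inr i \<Rightarrow> B $ l $ i)"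

definition B_pre :: "((complex^'n^'n) \<times> (complex^'n^'n)) set" where
  "B_pre = {(A, B). rank (block_mat A B) = CARD('n) \<and> A ** adj_mat B = B ** adj_mat A}"

definition orbit_cls :: "(complex^'n^'n) \<times> (complex^'n^'n) \<Rightarrow> ((complex^'n^'n) \<times> (complex^'n^'n)) set" where
  "orbit_cls p = {(T ** fst p, T ** snd p) | T. invertible T}"

definition quotient_topology :: "'a topology \<Rightarrow> ('a \<Rightarrow> 'b) \<Rightarrow> 'b topology" where
  "quotient_topology X f =
     topology (\<lambda>U. U \<subseteq> f ` topspace X \<and> openin X {x \<in> topspace X. f x \<in> U})"

definition BC_top :: "((complex^'n^'n) \<times> (complex^'n^'n)) set topology" where
  "BC_top = quotient_topology (top_of_set B_pre) orbit_cls"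

definition std_form :: "'n::finite set \<Rightarrow> complex^'n^'n \<Rightarrow> complex^'n^'n \<Rightarrow> complex^'n^'n \<Rightarrow> bool" where
  "std_form K S A B \<longleftrightarrow>
     (\<forall>i. (i \<in> K \<longrightarrow> column i A = - axis i 1 \<and> column i B = column i S) \<and>
          (i \<notin> K \<longrightarrow> column i A = column i S \<and> column i B = axis i 1))"

definition O_K :: "'n::finite set \<Rightarrow> ((complex^'n^'n) \<times> (complex^'n^'n)) set set" where
  "O_K K = {c \<in> topspace BC_top. \<exists>A B S. (A, B) \<in> c \<and> hermitian_mat S \<and> std_form K S A B}"

definition S_of :: "'n::finite set \<Rightarrow> ((complex^'n^'n) \<times> (complex^'n^'n)) set \<Rightarrow> complex^'n^'n" where
  "S_of K c = (THE S. hermitian_mat S \<and> (\<exists>A B. (A, B) \<in> c \<and> std_form K S A B))"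

type_synonym 'n cmat = "((complex, 'n) Finite_Cartesian_Product.vec, 'n) Finite_Cartesian_Product.vec"

definition S_K :: "'n::{finite,linorder} set \<Rightarrow> ('n cmat \<times> 'n cmat) set \<Rightarrow> complex Matrix.mat" where
  "S_K K c = (let ks = sorted_list_of_set K; S = S_of K c in
     Matrix.mat (card K) (card K) (\<lambda>(i, j). vec_nth (vec_nth S (ks ! i)) (ks ! j)))"

definition n_zero_eig :: "complex Matrix.mat \<Rightarrow> nat" where
  "n_zero_eig M = order 0 (char_poly M)"

definition n_pos_eig :: "complex Matrix.mat \<Rightarrow> nat" where
  "n_pos_eig M = (\<Sum>a \<in> {a. poly (char_poly M) a = 0 \<and> Im a = 0 \<and> Re a > 0}. order a (char_poly M))"

definition n_neg_eig :: "complex Matrix.mat \<Rightarrow> nat" where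
  "n_neg_eig M = (\<Sum>a \<in> {a. poly (char_poly M) a = 0 \<and> Im a = 0 \<and> Re a < 0}. order a (char_poly M))"

definition J_set :: "'n::{finite,linorder} set \<Rightarrow> nat \<Rightarrow> nat \<Rightarrow> nat \<Rightarrow> ('n cmat \<times> 'n cmat) set set" where
  "J_set K n0 np nn = {c \<in> O_K K. n_zero_eig (S_K K c) = n0 \<and> n_pos_eig (S_K K c) = np \<and> n_neg_eig (S_K K c) = nn}"

end

theory Submission imports Defs begin

no_notation Matrix.vec_index (infixl \<open>$\<close> 100)
no_notation Matrix.scalar_prod (infix \<open>\<bullet>\<close> 70)


lemma quad_nonpos_zero:
  fixes a b :: real
  assumes "\<And>t. 2 * t * a + t^2 * b \<le> 0"
  shows "a = 0"
proof -
  define t where "t = a / (\<bar>b\<bar> + 1)"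
  have pos: "\<bar>b\<bar> + 1 > 0" by simp
  have "2 * t * a + t^2 * b \<le> 0" by (rule assms)
  hence "(2 * t * a + t^2 * b) * (\<bar>b\<bar> + 1)^2 \<le> 0"
    by (simp add: mult_nonpos_nonneg)
  moreover have "(2 * t * a + t^2 * b) * (\<bar>b\<bar> + 1)^2 = a^2 * (2 * (\<bar>b\<bar> + 1) + b)"
  proof -
    have gen: "c \<noteq> 0 \<Longrightarrow> (2*(a/c)*a + (a/c)^2*b)*c^2 = a^2*(2*c+b)" for c :: real
      by (simp add: field_simps power2_eq_square)
    show ?thesis unfolding t_def using gen[of "\<bar>b\<bar> + 1"] pos by simp
  qed
  ultimately have "a^2 * (2 * (\<bar>b\<bar> + 1) + b) \<le> 0" by simp
  moreover have "2 * (\<bar>b\<bar> + 1) + b > 0" by (cases "b \<ge> 0") auto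
  ultimately have "a^2 \<le> 0"
    by (metis mult_le_0_iff not_less zero_le_power2)
  thus ?thesis by simp
qed

lemma self_adj_eig:
  fixes f :: "'a::euclidean_space \<Rightarrow> 'a"
  assumes lin: "linear f" and sa: "\<And>x y. f x \<bullet> y = x \<bullet> f y"
    and W: "subspace W" and inv: "\<And>x. x \<in> W \<Longrightarrow> f x \<in> W"
    and nz: "x0 \<in> W" "x0 \<noteq> 0"
  shows "\<exists>u\<in>W. norm u = 1 \<and> (\<exists>l. f u = l *\<^sub>R u)"
proof -
  define S where "S = W \<inter> sphere 0 1"
  have "compact S" unfolding S_def
    using closed_subspace[OF W] compact_sphere by (simp add: closed_Int_compact)
  moreover have "x0 /\<^sub>R norm x0 \<in> S" unfolding S_def using nz W
    by (simp add: subspace_scale)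
  hence "S \<noteq> {}" by auto
  moreover have "continuous_on S (\<lambda>x. x \<bullet> f x)"
  proof -
    have "bounded_linear f" using lin by (simp add: linear_conv_bounded_linear)
    hence "continuous_on S f" by (simp add: linear_continuous_on)
    thus ?thesis by (intro continuous_intros)
  qed
  ultimately obtain u where uS: "u \<in> S" and umax: "\<And>y. y \<in> S \<Longrightarrow> y \<bullet> f y \<le> u \<bullet> f u"
    using continuous_attains_sup[of S "\<lambda>x. x \<bullet> f x"] by blast
  define l where "l = u \<bullet> f u"
  have uW: "u \<in> W" and nu: "norm u = 1" using uS by (auto simp: S_def)
  have key: "v \<bullet> f v \<le> l * (norm v)^2" if "v \<in> W" for v
  proof (cases "v = 0")
    case True then show ?thesis using linear_0[OF lin] by simp
  next
    case False
    hence "v /\<^sub>R norm v \<in> S" using that W by (simp add: S_def subspace_scale)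
    hence "(v /\<^sub>R norm v) \<bullet> f (v /\<^sub>R norm v) \<le> l" using umax l_def by blast
    hence "(v \<bullet> f v) / (norm v)^2 \<le> l"
      by (simp add: linear_scale[OF lin] power2_eq_square divide_inverse mult_ac)
    thus ?thesis using False by (simp add: divide_le_eq mult.commute)
  qed
  have orth: "y \<bullet> (f u - l *\<^sub>R u) = 0" if yW: "y \<in> W" for y
  proof -
    define a where "a = y \<bullet> (f u - l *\<^sub>R u)"
    define b where "b = y \<bullet> f y - l * (norm y)^2"
    have "2 * t * a + t^2 * b \<le> 0" for t
    proof -
      have "u + t *\<^sub>R y \<in> W" using uW yW W by (simp add: subspace_add subspace_scale)
      from key[OF this] have "(u + t *\<^sub>R y) \<bullet> f (u + t *\<^sub>R y) \<le> l * (norm (u + t *\<^sub>R y))^2" .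
      moreover have "(u + t *\<^sub>R y) \<bullet> f (u + t *\<^sub>R y) = l + 2 * t * (y \<bullet> f u) + t^2 * (y \<bullet> f y)"
        using sa[of u y] sa[of y u] unfolding l_def
        by (simp add: linear_add[OF lin] linear_scale[OF lin] inner_add_left inner_add_right
              power2_eq_square algebra_simps inner_commute)
      moreover have "(norm (u + t *\<^sub>R y))^2 = 1 + 2 * t * (y \<bullet> u) + t^2 * (norm y)^2"
      proof -
        have "(norm (u + t *\<^sub>R y))^2 = (u + t *\<^sub>R y) \<bullet> (u + t *\<^sub>R y)" by (rule power2_norm_eq_inner)
        also have "\<dots> = u \<bullet> u + 2 * t * (y \<bullet> u) + t^2 * (y \<bullet> y)"
          by (simp add: inner_add_left inner_add_right algebra_simps power2_eq_square inner_commute)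
        finally show ?thesis using nu by (simp add: power2_norm_eq_inner[symmetric])
      qed
      ultimately show ?thesis unfolding a_def b_def
        by (simp add: inner_diff_right algebra_simps power2_eq_square)
    qed
    thus ?thesis using quad_nonpos_zero a_def by blast
  qed
  have "f u - l *\<^sub>R u \<in> W" using inv[OF uW] uW W by (simp add: subspace_diff subspace_scale)
  from orth[OF this] have "f u - l *\<^sub>R u = 0" by simp
  thus ?thesis using uW nu by (intro bexI[of _ u]) auto
qed

abbreviation idm :: "complex^'n^'n" where "idm \<equiv> Finite_Cartesian_Product.mat 1"

definition cinner :: "complex^'n \<Rightarrow> complex^'n \<Rightarrow> complex" where
  "cinner x y = (\<Sum>i\<in>UNIV. cnj (x$i) * y$i)"

lemma ifz_mult: "(if P then x else 0) * y = (if P then x * y else (0::'a::mult_zero))"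
  by simp
lemma mult_ifz: "y * (if P then x else 0) = (if P then y * x else (0::'a::mult_zero))"
  by simp
lemmas cvec_eq_iff = Finite_Cartesian_Product.vec_eq_iff

definition diagm :: "('n \<Rightarrow> complex) \<Rightarrow> complex^'n^'n" where
  "diagm a = (\<chi> i j. if i = j then a i else 0)"

definition unitary :: "complex^'n^'n \<Rightarrow> bool" where
  "unitary U \<longleftrightarrow> adj_mat U ** U = idm"

lemma adj_mat_nth[simp]: "adj_mat M $ i $ j = cnj (M $ j $ i)"
  by (simp add: adj_mat_def)

lemma adj_adj[simp]: "adj_mat (adj_mat M) = M"
  by (simp add: Finite_Cartesian_Product.vec_eq_iff)

lemma adj_mult: "adj_mat (A ** B) = adj_mat B ** adj_mat A"
  by (simp add: Finite_Cartesian_Product.vec_eq_iff matrix_matrix_mult_def mult.commute)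

lemma adj_add: "adj_mat (A + B) = adj_mat A + adj_mat B"
  by (simp add: Finite_Cartesian_Product.vec_eq_iff)

lemma adj_diff: "adj_mat (A - B) = adj_mat A - adj_mat B"
  by (simp add: Finite_Cartesian_Product.vec_eq_iff)

lemma adj_mat1[simp]: "adj_mat (idm :: complex^'n^'n) = idm"
  by (simp add: Finite_Cartesian_Product.vec_eq_iff Finite_Cartesian_Product.mat_def)

lemma adj_diagm: "adj_mat (diagm a) = diagm (\<lambda>i. cnj (a i))"
  by (simp add: Finite_Cartesian_Product.vec_eq_iff diagm_def)

lemma diagm_nth[simp]: "diagm a $ i $ j = (if i = j then a i else 0)"
  by (simp add: diagm_def)

lemma diagm_mult: "diagm a ** diagm b = diagm (\<lambda>i. a i * b i)"
  by (simp add: cvec_eq_iff matrix_matrix_mult_def ifz_mult mult_ifz)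

lemma diagm_one: "diagm (\<lambda>i. 1) = idm"
  by (simp add: Finite_Cartesian_Product.vec_eq_iff Finite_Cartesian_Product.mat_def)

lemma unitary_right: "unitary U \<Longrightarrow> U ** adj_mat U = idm"
  unfolding unitary_def using matrix_left_right_inverse by blast

lemma unitary_mult: "unitary U \<Longrightarrow> unitary V \<Longrightarrow> unitary (U ** V)"
  unfolding unitary_def adj_mult
  by (metis matrix_mul_assoc matrix_mul_lid)

lemma cinner_mat: "cinner (A *v x) y = cinner x (adj_mat A *v y)"
proof -
  have "cinner (A *v x) y = (\<Sum>i\<in>UNIV. \<Sum>j\<in>UNIV. cnj (A$i$j) * cnj (x$j) * y$i)"
    by (simp add: cinner_def matrix_vector_mult_def sum_distrib_right)
  also have "\<dots> = (\<Sum>j\<in>UNIV. \<Sum>i\<in>UNIV. cnj (A$i$j) * cnj (x$j) * y$i)"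
    by (rule sum.swap)
  also have "\<dots> = cinner x (adj_mat A *v y)"
    by (simp add: cinner_def matrix_vector_mult_def sum_distrib_left mult_ac)
  finally show ?thesis .
qed

lemma inner_Re_cinner: "x \<bullet> y = Re (cinner x y)"
  by (simp add: inner_vec_def cinner_def inner_complex_def Re_sum)

lemma herm_sa: "hermitian_mat H \<Longrightarrow> (H *v x) \<bullet> y = x \<bullet> (H *v y)"
  unfolding inner_Re_cinner cinner_mat hermitian_mat_def by simp

lemma vec_scaleR_nth: "(c *\<^sub>R x) $ i = of_real c * (x $ i :: complex)"
  by (simp only: vector_scaleR_component) (simp add: scaleR_conv_of_real)

lemma cinner_scaleR_left[simp]: "cinner (c *\<^sub>R x) y = of_real c * cinner x y"
  by (simp add: cinner_def sum_distrib_left mult_ac vec_scaleR_nth del: vector_scaleR_component)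

lemma cinner_scaleR_right[simp]: "cinner x (c *\<^sub>R y) = of_real c * cinner x y"
  by (simp add: cinner_def sum_distrib_left mult_ac vec_scaleR_nth del: vector_scaleR_component)

lemma cinner_smult_right[simp]: "cinner x (c *s y) = c * cinner x y"
  by (simp add: cinner_def sum_distrib_left mult_ac)

lemma cinner_smult_left[simp]: "cinner (c *s x) y = cnj c * cinner x y"
  by (simp add: cinner_def sum_distrib_left mult_ac)

lemma cinner_add_right: "cinner x (y + z) = cinner x y + cinner x z"
  by (simp add: cinner_def distrib_left sum.distrib)

lemma cinner_diff_right: "cinner x (y - z) = cinner x y - cinner x z"
  by (simp add: cinner_def right_diff_distrib sum_subtractf)

lemma cinner_sum_right: "cinner x (sum f A) = (\<Sum>a\<in>A. cinner x (f a))"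
  by (simp add: cinner_def sum_distrib_left sum.swap[of _ A] sum_component)

lemma cinner_cnj: "cnj (cinner x y) = cinner y x"
  by (simp add: cinner_def mult.commute)

lemma cinner_self: "cinner x x = of_real ((norm x)^2)"
proof -
  have "cinner x x = (\<Sum>i\<in>UNIV. of_real ((cmod (x$i))^2))"
    unfolding cinner_def by (intro sum.cong refl) (simp add: complex_norm_square mult.commute del: of_real_power)
  also have "\<dots> = of_real ((norm x)^2)"
    by (simp add: norm_vec_def L2_set_def sum_nonneg)
  finally show ?thesis .
qed

lemma cinner_axis_left: "cinner (axis i c) y = cnj c * y $ i"
  unfolding cinner_def axis_def by (simp add: if_distrib[where f = cnj] ifz_mult cong: if_cong)

lemma cinner_axis_right: "cinner x (axis i c) = cnj (x $ i) * c"
  unfolding cinner_def axis_def by (simp add: mult_ifz cong: if_cong)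

definition VK :: "'n set \<Rightarrow> (complex^'n) set" where
  "VK K = {x. \<forall>i. i \<notin> K \<longrightarrow> x $ i = 0}"

lemma subspace_VK: "subspace (VK K)"
  by (auto simp: subspace_def VK_def)

lemma smult_in_real_span:
  fixes v :: "complex^'n" and c :: complex
  assumes "v \<in> C" "\<i> *s v \<in> C"
  shows "c *s v \<in> span C"
proof -
  have e: "complex_of_real (Re c) + \<i> * complex_of_real (Im c) = c" by (rule complex_eq[symmetric])
  have "c *s v = Re c *\<^sub>R v + Im c *\<^sub>R (\<i> *s v)"
  proof (rule iffD2[OF cvec_eq_iff], rule allI)
    fix i
    have "c * v$i = (complex_of_real (Re c) + \<i> * complex_of_real (Im c)) * v$i" by (simp only: e)
    also have "\<dots> = complex_of_real (Re c) * v$i + complex_of_real (Im c) * (\<i> * v$i)"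
      by (simp add: algebra_simps)
    finally show "(c *s v) $ i = (Re c *\<^sub>R v + Im c *\<^sub>R (\<i> *s v)) $ i"
      by (simp only: vector_add_component vec_scaleR_nth vector_smult_component)
  qed
  thus ?thesis using assms by (simp add: span_add span_scale span_base)
qed

lemma complement_nonzero:
  fixes u :: "'n::finite \<Rightarrow> complex^'n"
  assumes FK: "F \<subseteq> K" and card: "card F < card K"
    and uV: "\<And>j. j \<in> F \<Longrightarrow> u j \<in> VK K"
    and on: "\<And>i j. i \<in> F \<Longrightarrow> j \<in> F \<Longrightarrow> cinner (u i) (u j) = (if i = j then 1 else 0)"
  shows "\<exists>x. x \<in> VK K \<and> x \<noteq> 0 \<and> (\<forall>j\<in>F. cinner (u j) x = 0)"
proof (rule ccontr)
  assume nex: "\<not> ?thesis"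
  define C where "C = u ` F \<union> (\<lambda>j. \<i> *s u j) ` F"
  have span_lc: "(\<Sum>j\<in>F. d j *s u j) \<in> span C" for d
    by (rule span_sum, rule smult_in_real_span) (auto simp: C_def)
  have ax: "\<exists>d. axis i 1 = (\<Sum>j\<in>F. d j *s u j)" if iK: "i \<in> K" for i
  proof -
    define x where "x = axis i 1 - (\<Sum>j\<in>F. cinner (u j) (axis i 1) *s u j)"
    have "x \<in> VK K"
    proof -
      have "axis i (1::complex) \<in> VK K" using iK by (auto simp: VK_def axis_def)
      moreover have "(\<Sum>j\<in>F. cinner (u j) (axis i 1) *s u j) \<in> VK K"
        using uV by (auto simp: VK_def sum_component)
      ultimately show ?thesis unfolding x_def by (auto simp: VK_def)
    qed
    moreover have "cinner (u l) x = 0" if lF: "l \<in> F" for l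
    proof -
      have "cinner (u l) (\<Sum>j\<in>F. cinner (u j) (axis i 1) *s u j)
          = (\<Sum>j\<in>F. cinner (u j) (axis i 1) * (if l = j then 1 else 0))"
        by (simp add: cinner_sum_right on[OF lF])
      also have "\<dots> = cinner (u l) (axis i 1)" using lF by (simp add: mult_ifz)
      finally show ?thesis unfolding x_def by (simp add: cinner_diff_right)
    qed
    ultimately have "x = 0" using nex by blast
    thus ?thesis unfolding x_def by auto
  qed
  define B where "B = (\<lambda>i. axis i (1::complex)) ` K \<union> (\<lambda>i. axis i \<i>) ` K"
  have BC: "B \<subseteq> span C"
  proof
    fix y assume "y \<in> B"
    then obtain i where iK: "i \<in> K" and y: "y = axis i 1 \<or> y = axis i \<i>" unfolding B_def by auto
    obtain d where d: "axis i 1 = (\<Sum>j\<in>F. d j *s u j)" using ax[OF iK] by blast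
    have "axis i \<i> = \<i> *s axis i 1" by (simp add: cvec_eq_iff axis_def)
    also have "\<dots> = (\<Sum>j\<in>F. (\<i> * d j) *s u j)" unfolding d
      by (simp add: scalar_mult_eq_scaleR cvec_eq_iff sum_component sum_distrib_left mult.assoc)
    finally show "y \<in> span C" using y d span_lc by metis
  qed
  have axin: "axis i c1 \<bullet> axis k c2 = (if i = k then Re (cnj c1 * c2) else 0)" for i k and c1 c2 :: complex
    unfolding inner_Re_cinner cinner_axis_left by (simp add: axis_def)
  have axeq: "axis i c1 = axis k c2 \<longleftrightarrow> (c1 = 0 \<and> c2 = 0) \<or> (i = k \<and> c1 = c2)" for i k and c1 c2 :: complex
    by (auto simp: cvec_eq_iff axis_def)
  have indep: "independent B"
  proof (rule pairwise_orthogonal_independent)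
    show "pairwise real_inner_class.orthogonal B"
    proof (unfold pairwise_def, intro ballI impI)
      fix x y assume "x \<in> B" "y \<in> B" "x \<noteq> y"
      then obtain i k c1 c2 where "x = axis i c1" "y = axis k c2" "c1 \<in> {1, \<i>}" "c2 \<in> {1, \<i>}"
        unfolding B_def by blast
      with \<open>x \<noteq> y\<close> show "real_inner_class.orthogonal x y"
        unfolding real_inner_class.orthogonal_def by (auto simp: axin axeq)
    qed
    have "axis i c \<noteq> (0::complex^'n)" if "c \<noteq> 0" for i and c :: complex
      using that by (auto simp: cvec_eq_iff axis_def)
    thus "0 \<notin> B" unfolding B_def by (metis (no_types, lifting) UnE imageE one_neq_zero complex_i_not_zero)
  qed
  have "card B = card K + card K"
  proof -
    have "card B = card ((\<lambda>i. axis i (1::complex)) ` K) + card ((\<lambda>i. axis i \<i>) ` K)"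
      unfolding B_def
    proof (rule card_Un_disjoint)
      show "(\<lambda>i. axis i (1::complex)) ` K \<inter> (\<lambda>i. axis i \<i>) ` K = {}"
        by (auto simp: axeq)
    qed auto
    moreover have "inj_on (\<lambda>i. axis i (1::complex)) K"
      by (auto simp: inj_on_def axeq)
    moreover have "inj_on (\<lambda>i. axis i \<i>) K"
      by (auto simp: inj_on_def axeq)
    ultimately show ?thesis by (simp add: card_image)
  qed
  moreover have "card C \<le> card F + card F"
  proof -
    have "card C \<le> card (u ` F) + card ((\<lambda>j. \<i> *s u j) ` F)" unfolding C_def by (rule card_Un_le)
    also have "\<dots> \<le> card F + card F" by (intro add_mono card_image_le) auto
    finally show ?thesis .
  qed
  moreover have "card B \<le> card C"
    using independent_span_bound[OF _ indep BC] by (simp add: C_def)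
  ultimately show False using card by linarith
qed

lemma cinner_zero_right[simp]: "cinner x 0 = 0"
  by (simp add: cinner_def)

lemma cinner_zero_left[simp]: "cinner 0 x = 0"
  by (simp add: cinner_def)

lemma mv_scaleR: "(A::complex^'n^'n) *v (c *\<^sub>R x) = c *\<^sub>R (A *v x)"
  by (rule linear_scale[OF matrix_vector_mul_linear])

lemma common_eig_family:
  fixes H1 H2 :: "complex^'n::finite^'n"
  assumes h1: "hermitian_mat H1" and h2: "hermitian_mat H2"
    and comm: "H1 ** H2 = H2 ** H1"
    and inv1: "\<And>x. x \<in> VK K \<Longrightarrow> H1 *v x \<in> VK K"
    and inv2: "\<And>x. x \<in> VK K \<Longrightarrow> H2 *v x \<in> VK K"
  shows "\<exists>u a b. \<forall>i\<in>K. u i \<in> VK K \<and> H1 *v u i = a i *\<^sub>R u i \<and> H2 *v u i = b i *\<^sub>R u i \<and>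
            (\<forall>j\<in>K. cinner (u i) (u j) = (if i = j then 1 else 0))"
proof -
  let ?P = "\<lambda>F. \<exists>u a b. \<forall>i\<in>F. u i \<in> VK K \<and> H1 *v u i = a i *\<^sub>R u i \<and> H2 *v u i = b i *\<^sub>R u i \<and>
            (\<forall>j\<in>F. cinner (u i) (u j) = (if i = j then (1::complex) else 0))"
  have "?P F" if "F \<subseteq> K" for F
  proof -
    have "finite F" by simp
    thus ?thesis using that
    proof (induction F rule: finite_subset_induct')
      case empty
      then show ?case by simp
    next
      case (insert k F)
      then obtain u a b where IH: "\<forall>i\<in>F. u i \<in> VK K \<and> H1 *v u i = a i *\<^sub>R u i \<and> H2 *v u i = b i *\<^sub>R u i \<and>
            (\<forall>j\<in>F. cinner (u i) (u j) = (if i = j then (1::complex) else 0))" by blast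
      have FK: "F \<subseteq> K" using insert by auto
      have cardF: "card F < card K"
        using insert FK by (intro psubset_card_mono) auto
      define W where "W = {x \<in> VK K. \<forall>j\<in>F. cinner (u j) x = 0}"
      have lin1: "linear ((*v) H1)" and lin2: "linear ((*v) H2)" by (rule matrix_vector_mul_linear)+
      have subW: "subspace W"
        unfolding W_def subspace_def using subspace_VK[of K]
        by (auto simp: subspace_def cinner_add_right)
      have Hinv: "H *v x \<in> W" if x: "x \<in> W" and h: "hermitian_mat H"
        and invH: "\<And>x. x \<in> VK K \<Longrightarrow> H *v x \<in> VK K"
        and eig: "\<And>j. j \<in> F \<Longrightarrow> \<exists>c. H *v u j = c *\<^sub>R u j" for H x
      proof -
        have "cinner (u j) (H *v x) = 0" if jF: "j \<in> F" for j
        proof -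
          obtain c where c: "H *v u j = c *\<^sub>R u j" using eig[OF jF] by blast
          have "cinner (u j) (H *v x) = cinner (H *v u j) x"
            using h by (simp add: cinner_mat hermitian_mat_def)
          also have "\<dots> = 0" using c x jF by (simp add: W_def)
          finally show ?thesis .
        qed
        thus ?thesis using x invH by (simp add: W_def)
      qed
      obtain x0 where x0: "x0 \<in> VK K" "x0 \<noteq> 0" "\<forall>j\<in>F. cinner (u j) x0 = 0"
        using complement_nonzero[OF FK cardF, of u] IH by blast
      have x0W: "x0 \<in> W" using x0 by (simp add: W_def)
      obtain u1 l where u1: "u1 \<in> W" "norm u1 = 1" "H1 *v u1 = l *\<^sub>R u1"
        using self_adj_eig[OF lin1 herm_sa[OF h1] subW _ x0W x0(2)] Hinv[OF _ h1 inv1] IH by blast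
      define W1 where "W1 = {x \<in> W. H1 *v x = l *\<^sub>R x}"
      have subW1: "subspace W1"
        using subW unfolding W1_def subspace_def
        by (auto simp: matrix_vector_right_distrib mv_scaleR scaleR_right_distrib)
      have W1inv: "H2 *v x \<in> W1" if x: "x \<in> W1" for x
      proof -
        have "H2 *v x \<in> W" using Hinv[OF _ h2 inv2] x IH by (auto simp: W1_def)
        moreover have "H1 *v (H2 *v x) = l *\<^sub>R (H2 *v x)"
          using x by (simp add: matrix_vector_mul_assoc comm W1_def)
              (metis matrix_vector_mul_assoc mv_scaleR)
        ultimately show ?thesis by (simp add: W1_def)
      qed
      have u1W1: "u1 \<in> W1" "u1 \<noteq> 0" using u1 by (auto simp: W1_def)
      obtain v m where v: "v \<in> W1" "norm v = 1" "H2 *v v = m *\<^sub>R v"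
        using self_adj_eig[OF lin2 herm_sa[OF h2] subW1 W1inv u1W1] by blast
      have vW: "v \<in> W" and vH1: "H1 *v v = l *\<^sub>R v" using v by (auto simp: W1_def)
      have vv: "cinner v v = 1" using v by (simp add: cinner_self)
      have vperp: "cinner (u j) v = 0" "cinner v (u j) = 0" if "j \<in> F" for j
        using vW that cinner_cnj[of v "u j"] by (auto simp: W_def)
      show ?case
        apply (rule exI[of _ "u(k := v)"], rule exI[of _ "a(k := l)"], rule exI[of _ "b(k := m)"])
        using IH insert.hyps vv vperp vW vH1 v(3) by (auto simp: W_def)
    qed
  qed
  thus ?thesis by blast
qed

definition ublock :: "'n set \<Rightarrow> complex^'n^'n \<Rightarrow> bool" where
  "ublock K U \<longleftrightarrow> (\<forall>r j. (r \<notin> K \<or> j \<notin> K) \<longrightarrow> U$r$j = (if r = j then 1 else 0))"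

definition ksupp :: "'n set \<Rightarrow> complex^'n^'n \<Rightarrow> bool" where
  "ksupp K N \<longleftrightarrow> (\<forall>r s. (r \<notin> K \<or> s \<notin> K) \<longrightarrow> N$r$s = 0)"

definition umat :: "'n set \<Rightarrow> ('n \<Rightarrow> complex^'n) \<Rightarrow> complex^'n^'n" where
  "umat K u = (\<chi> r i. if i \<in> K then u i $ r else (if r = i then 1 else 0))"

definition smat :: "complex \<Rightarrow> complex^'n^'n \<Rightarrow> complex^'n^'n" where
  "smat c A = (\<chi> i j. c * A$i$j)"

lemma smat_nth[simp]: "smat c A $ i $ j = c * A $ i $ j"
  by (simp add: smat_def)

lemma smat_mult_left: "smat c A ** B = smat c (A ** B)"
  by (simp add: cvec_eq_iff matrix_matrix_mult_def sum_distrib_left mult.assoc)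

lemma smat_mult_right: "A ** smat c B = smat c (A ** B)"
  by (simp add: cvec_eq_iff matrix_matrix_mult_def sum_distrib_left mult_ac)

lemma matrix_add_rdistrib: "((B + C) ** A) = (B ** A) + (C ** A :: complex^'n^'n)"
  by (simp add: cvec_eq_iff matrix_matrix_mult_def sum.distrib distrib_right)

lemma matrix_sub_ldistrib: "(A ** (B - C)) = (A ** B) - (A ** C :: complex^'n^'n)"
  by (simp add: cvec_eq_iff matrix_matrix_mult_def sum_subtractf right_diff_distrib)

lemma matrix_sub_rdistrib: "((B - C) ** A) = (B ** A) - (C ** A :: complex^'n^'n)"
  by (simp add: cvec_eq_iff matrix_matrix_mult_def sum_subtractf left_diff_distrib)

lemma mv_add_left: "(A + B) *v x = A *v x + B *v (x::complex^'n)"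
  by (simp add: cvec_eq_iff matrix_vector_mult_def sum.distrib distrib_right)

lemma mv_smat: "smat c A *v x = c *s (A *v x)"
  by (simp add: cvec_eq_iff matrix_vector_mult_def sum_distrib_left mult.assoc)

lemma scaleR_smult: "c *\<^sub>R (x::complex^'n) = complex_of_real c *s x"
  by (simp add: cvec_eq_iff vec_scaleR_nth del: vector_scaleR_component)

lemma triple_nth: "(U ** diagm f ** adj_mat U) $ r $ s = (\<Sum>k\<in>UNIV. U$r$k * f k * cnj (U$s$k))"
  by (simp add: matrix_matrix_mult_def ifz_mult mult_ifz)

lemma umat_unitary:
  assumes uV: "\<And>i. i \<in> K \<Longrightarrow> u i \<in> VK K"
    and on: "\<And>i j. i \<in> K \<Longrightarrow> j \<in> K \<Longrightarrow> cinner (u i) (u j) = (if i = j then 1 else 0)"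
  shows "unitary (umat K u)" "ublock K (umat K u)"
proof -
  define w where "w i = (if i \<in> K then u i else axis i 1)" for i
  have Uw: "umat K u $ r $ i = w i $ r" for r i by (simp add: umat_def w_def axis_def)
  have ww: "cinner (w i) (w j) = (if i = j then 1 else 0)" for i j
  proof (cases "i \<in> K")
    case True
    show ?thesis
    proof (cases "j \<in> K")
      case True
      then show ?thesis using \<open>i \<in> K\<close> on by (simp add: w_def)
    next
      case False
      then show ?thesis using \<open>i \<in> K\<close> uV[of i] by (auto simp: w_def cinner_axis_right VK_def)
    qed
  next
    case False
    show ?thesis
    proof (cases "j \<in> K")
      case True
      then show ?thesis using \<open>i \<notin> K\<close> uV[of j] by (auto simp: w_def cinner_axis_left VK_def)
    next
      case False
      then show ?thesis using \<open>i \<notin> K\<close> by (simp add: w_def cinner_axis_left) (simp add: axis_def)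
    qed
  qed
  show "unitary (umat K u)"
    unfolding unitary_def
    by (simp add: cvec_eq_iff matrix_matrix_mult_def Uw ww[unfolded cinner_def]
        Finite_Cartesian_Product.mat_def)
  show "ublock K (umat K u)"
    unfolding ublock_def using uV by (auto simp: umat_def VK_def)
qed

lemma decomp:
  assumes N: "ksupp K N" and eig: "\<And>i. i \<in> K \<Longrightarrow> N *v u i = \<mu> i *s u i"
    and U: "unitary (umat K u)"
  shows "N = umat K u ** diagm (\<lambda>i. if i \<in> K then \<mu> i else 0) ** adj_mat (umat K u)"
proof -
  let ?U = "umat K u" and ?D = "diagm (\<lambda>i. if i \<in> K then \<mu> i else 0)"
  have NU: "N ** ?U = ?U ** ?D"
  proof (rule iffD2[OF cvec_eq_iff], intro allI iffD2[OF cvec_eq_iff])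
    fix r j
    show "(N ** ?U) $ r $ j = (?U ** ?D) $ r $ j"
    proof (cases "j \<in> K")
      case True
      have "(N ** ?U) $ r $ j = (N *v u j) $ r"
        using True by (simp add: matrix_matrix_mult_def matrix_vector_mult_def umat_def)
      also have "\<dots> = \<mu> j * u j $ r" using eig[OF True] by simp
      finally show ?thesis using True by (simp add: matrix_matrix_mult_def umat_def mult_ifz)
    next
      case False
      have "(N ** ?U) $ r $ j = N $ r $ j"
        using False by (simp add: matrix_matrix_mult_def umat_def mult_ifz)
      also have "\<dots> = 0" using N False by (simp add: ksupp_def)
      finally show ?thesis using False by (simp add: matrix_matrix_mult_def mult_ifz)
    qed
  qed
  have "N = N ** (?U ** adj_mat ?U)" using unitary_right[OF U] by simp
  also have "\<dots> = ?U ** ?D ** adj_mat ?U" by (simp add: matrix_mul_assoc NU)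
  finally show ?thesis .
qed

lemma ksupp_inv: "ksupp K H \<Longrightarrow> x \<in> VK K \<Longrightarrow> H *v x \<in> VK K"
  by (simp add: ksupp_def VK_def matrix_vector_mult_def)

lemma herm_spectral:
  fixes H :: "complex^'n::finite^'n" and K :: "'n set"
  assumes h: "hermitian_mat H" and s: "ksupp K H"
  shows "\<exists>U a. unitary U \<and> ublock K U \<and> (\<forall>i. i \<notin> K \<longrightarrow> a i = 0) \<and>
           H = U ** diagm (\<lambda>i. complex_of_real (a i)) ** adj_mat U"
proof -
  have h0: "hermitian_mat (0::complex^'n^'n)" by (simp add: hermitian_mat_def cvec_eq_iff)
  have c0: "H ** 0 = 0 ** H" by (simp add: cvec_eq_iff matrix_matrix_mult_def)
  have i0: "(0::complex^'n^'n) *v x \<in> VK K" for x by (simp add: VK_def matrix_vector_mult_def)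
  obtain u a b where ev: "\<forall>i\<in>K. u i \<in> VK K \<and> H *v u i = a i *\<^sub>R u i \<and> 0 *v u i = b i *\<^sub>R u i \<and>
            (\<forall>j\<in>K. cinner (u i) (u j) = (if i = j then 1 else 0))"
    using common_eig_family[OF h h0 c0 ksupp_inv[OF s] i0] by blast
  have U: "unitary (umat K u)" "ublock K (umat K u)" using umat_unitary[of K u] ev by auto
  have "H = umat K u ** diagm (\<lambda>i. if i \<in> K then complex_of_real (a i) else 0) ** adj_mat (umat K u)"
    by (rule decomp[OF s _ U(1)]) (use ev in \<open>simp add: scaleR_smult\<close>)
  moreover have "(\<lambda>i. if i \<in> K then complex_of_real (a i) else 0) = (\<lambda>i. complex_of_real (if i \<in> K then a i else 0))"
    by auto
  ultimately show ?thesis using U by (intro exI[of _ "umat K u"] exI[of _ "\<lambda>i. if i \<in> K then a i else 0"]) auto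
qed


lemma adj_smat: "adj_mat (smat c A) = smat (cnj c) (adj_mat A)"
  by (simp add: cvec_eq_iff)

lemma ksupp_adj: "ksupp K N \<Longrightarrow> ksupp K (adj_mat N)"
  by (auto simp: ksupp_def)

lemma unitary_spectral:
  fixes W :: "complex^'n::finite^'n" and K :: "'n set"
  assumes W: "unitary W" and b: "ublock K W"
  shows "\<exists>V \<mu>. unitary V \<and> ublock K V \<and> (\<forall>i. cmod (\<mu> i) = 1) \<and> (\<forall>i. i \<notin> K \<longrightarrow> \<mu> i = 1) \<and>
           W = V ** diagm \<mu> ** adj_mat V"
proof -
  define E :: "complex^'n^'n" where "E = diagm (\<lambda>i. if i \<in> K then 1 else 0)"
  have WE: "W ** E = E ** W"
    using b by (auto simp: cvec_eq_iff matrix_matrix_mult_def E_def ublock_def mult_ifz ifz_mult)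
  have EE: "E ** E = E" by (simp add: E_def diagm_mult if_distrib cong: if_cong)
  have adjE: "adj_mat E = E" by (simp add: E_def adj_diagm if_distrib cong: if_cong)
  have WU: "W ** adj_mat W = idm" by (rule unitary_right[OF W])
  have UW: "adj_mat W ** W = idm" using W by (simp add: unitary_def)
  define N where "N = W ** E"
  have adjN: "adj_mat N = E ** adj_mat W" by (simp add: N_def adj_mult adjE)
  have NN1: "N ** adj_mat N = E"
  proof -
    have "N ** adj_mat N = W ** E ** (E ** adj_mat W)" unfolding adjN by (simp only: N_def)
    also have "\<dots> = (W ** E) ** adj_mat W" by (metis EE matrix_mul_assoc)
    also have "\<dots> = E ** (W ** adj_mat W)" by (simp only: WE matrix_mul_assoc)
    finally show ?thesis by (simp add: WU)
  qed
  have NN2: "adj_mat N ** N = E"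
  proof -
    have "adj_mat N ** N = E ** (adj_mat W ** W) ** E"
      unfolding adjN by (simp only: N_def matrix_mul_assoc)
    thus ?thesis by (simp add: UW EE)
  qed
  have sN: "ksupp K N"
    using b by (auto simp: ksupp_def N_def E_def ublock_def matrix_matrix_mult_def mult_ifz)
  define H1 where "H1 = smat (1/2) (N + adj_mat N)"
  define H2 where "H2 = smat (1/(2*\<i>)) (N - adj_mat N)"
  have h1: "hermitian_mat H1"
    by (simp add: hermitian_mat_def H1_def adj_smat adj_add add.commute)
  have h2: "hermitian_mat H2"
    by (auto simp: hermitian_mat_def H2_def cvec_eq_iff field_simps)
  have s1: "ksupp K H1" and s2: "ksupp K H2"
    using sN ksupp_adj[OF sN] by (auto simp: ksupp_def H1_def H2_def)
  have comm: "H1 ** H2 = H2 ** H1"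
  proof -
    have "(N + adj_mat N) ** (N - adj_mat N) = (N - adj_mat N) ** (N + adj_mat N)"
      by (simp add: matrix_add_ldistrib matrix_add_rdistrib matrix_sub_ldistrib matrix_sub_rdistrib NN1 NN2)
    thus ?thesis by (simp add: H1_def H2_def smat_mult_left smat_mult_right cvec_eq_iff mult_ac)
  qed
  have NH: "N = H1 + smat \<i> H2"
    by (simp add: H1_def H2_def cvec_eq_iff field_simps)
  obtain u a c where ev: "\<forall>i\<in>K. u i \<in> VK K \<and> H1 *v u i = a i *\<^sub>R u i \<and> H2 *v u i = c i *\<^sub>R u i \<and>
            (\<forall>j\<in>K. cinner (u i) (u j) = (if i = j then 1 else 0))"
    using common_eig_family[OF h1 h2 comm ksupp_inv[OF s1] ksupp_inv[OF s2]] by blast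
  define \<nu> where "\<nu> i = complex_of_real (a i) + \<i> * complex_of_real (c i)" for i
  have Nu: "N *v u i = \<nu> i *s u i" if "i \<in> K" for i
    using ev that by (simp add: NH mv_add_left mv_smat scaleR_smult \<nu>_def cvec_eq_iff algebra_simps)
  have V: "unitary (umat K u)" "ublock K (umat K u)" using umat_unitary[of K u] ev by auto
  have Ndec: "N = umat K u ** diagm (\<lambda>i. if i \<in> K then \<nu> i else 0) ** adj_mat (umat K u)"
    by (rule decomp[OF sN Nu V(1)])
  have nu1: "cmod (\<nu> i) = 1" if iK: "i \<in> K" for i
  proof -
    have uu: "cinner (u i) (u i) = 1" using ev iK by auto
    have Eu: "E *v u i = u i" using ev iK
      by (auto simp: E_def cvec_eq_iff matrix_vector_mult_def VK_def ifz_mult)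
    have "cinner (N *v u i) (N *v u i) = cinner (u i) ((adj_mat N ** N) *v u i)"
      by (simp add: cinner_mat matrix_vector_mul_assoc)
    also have "\<dots> = 1" by (simp add: NN2 Eu uu)
    finally have "cnj (\<nu> i) * \<nu> i = 1" using Nu[OF iK] uu by (simp add: mult.commute)
    hence "complex_of_real ((cmod (\<nu> i))^2) = 1"
      by (simp add: complex_norm_square mult.commute del: of_real_power)
    hence "(cmod (\<nu> i))^2 = 1" using of_real_eq_1_iff by blast
    thus ?thesis by (metis abs_norm_cancel power2_eq_1_iff abs_neg_one abs_one)
  qed
  define V where "V = umat K u"
  have Vb: "ublock K V" using V by (simp add: V_def)
  have F: "W - N = V ** diagm (\<lambda>i. if i \<in> K then 0 else 1) ** adj_mat V"
  proof (rule iffD2[OF cvec_eq_iff], intro allI iffD2[OF cvec_eq_iff])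
    fix r s
    have lhs: "(W - N) $ r $ s = (if s \<in> K then 0 else (if r = s then 1 else 0))"
      using b by (auto simp: N_def E_def matrix_matrix_mult_def mult_ifz ublock_def)
    have "(V ** diagm (\<lambda>i. if i \<in> K then 0 else 1) ** adj_mat V) $ r $ s
        = (\<Sum>k\<in>UNIV. V$r$k * (if k \<in> K then 0 else 1) * cnj (V$s$k))"
      by (rule triple_nth)
    also have "\<dots> = (\<Sum>k\<in>UNIV. if k = s then (if s \<in> K then 0 else (if r = s then 1 else 0)) else 0)"
      using Vb by (intro sum.cong refl) (auto simp: ublock_def)
    also have "\<dots> = (if s \<in> K then 0 else (if r = s then 1 else 0))" by simp
    finally show "(W - N) $ r $ s = (V ** diagm (\<lambda>i. if i \<in> K then 0 else 1) ** adj_mat V) $ r $ s"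
      using lhs by simp
  qed
  define \<mu> where "\<mu> i = (if i \<in> K then \<nu> i else 1)" for i
  have "W = N + V ** diagm (\<lambda>i. if i \<in> K then 0 else 1) ** adj_mat V"
    by (simp add: F[symmetric])
  also have "\<dots> = V ** diagm (\<lambda>i. if i \<in> K then \<nu> i else 0) ** adj_mat V + V ** diagm (\<lambda>i. if i \<in> K then 0 else 1) ** adj_mat V"
    by (simp only: Ndec V_def)
  also have "\<dots> = V ** (diagm (\<lambda>i. if i \<in> K then \<nu> i else 0) + diagm (\<lambda>i. if i \<in> K then 0 else 1)) ** adj_mat V"
    by (simp add: matrix_add_ldistrib matrix_add_rdistrib)
  also have "diagm (\<lambda>i. if i \<in> K then \<nu> i else 0) + diagm (\<lambda>i. if i \<in> K then 0 else 1) = diagm \<mu>"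
    by (simp add: cvec_eq_iff \<mu>_def)
  finally have "W = V ** diagm \<mu> ** adj_mat V" .
  moreover have "\<forall>i. cmod (\<mu> i) = 1" using nu1 by (simp add: \<mu>_def)
  ultimately show ?thesis using V Vb unfolding V_def
    by (intro exI[of _ "umat K u"] exI[of _ \<mu>]) (auto simp: \<mu>_def)
qed

definition Rm :: "'n::{finite,linorder} set \<Rightarrow> 'n cmat \<Rightarrow> complex Matrix.mat" where
  "Rm K A = Matrix.mat (card K) (card K) (\<lambda>(i, j). A $ (sorted_list_of_set K ! i) $ (sorted_list_of_set K ! j))"

lemma S_K_Rm: "S_K K c = Rm K (S_of K c)"
  by (simp add: S_K_def Rm_def Let_def)

lemma ks_facts:
  fixes K :: "'n::{finite,linorder} set"
  shows "length (sorted_list_of_set K) = card K" "set (sorted_list_of_set K) = K"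
    "distinct (sorted_list_of_set K)"
    "i < card K \<Longrightarrow> sorted_list_of_set K ! i \<in> K"
  by (auto simp: nth_mem[of i "sorted_list_of_set K", simplified])

lemma ks_bij:
  fixes K :: "'n::{finite,linorder} set"
  shows "bij_betw (\<lambda>i. sorted_list_of_set K ! i) {..<card K} K"
  using bij_betw_nth[of "sorted_list_of_set K" "{..<card K}" K] ks_facts by simp

lemma Rm_carrier[simp]: "Rm K A \<in> carrier_mat (card K) (card K)"
  by (simp add: Rm_def)

lemma Rm_dims[simp]: "dim_row (Rm K A) = card K" "dim_col (Rm K A) = card K"
  by (simp_all add: Rm_def)

lemma Rm_nth[simp]: "i < card K \<Longrightarrow> j < card K \<Longrightarrow>
    Rm K A $$ (i, j) = A $ (sorted_list_of_set K ! i) $ (sorted_list_of_set K ! j)"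
  by (simp add: Rm_def)

lemma Rm_mult:
  fixes K :: "'n::{finite,linorder} set"
  assumes A: "\<And>r j. r \<in> K \<Longrightarrow> j \<notin> K \<Longrightarrow> A$r$j = 0"
  shows "Rm K (A ** B) = Rm K A * Rm K B"
proof (rule eq_matI)
  fix i j assume i: "i < dim_row (Rm K A * Rm K B)" and j: "j < dim_col (Rm K A * Rm K B)"
  let ?ks = "sorted_list_of_set K"
  have i': "i < card K" and j': "j < card K" using i j by auto
  have "(Rm K A * Rm K B) $$ (i, j) = (\<Sum>l\<in>{..<card K}. A $ (?ks!i) $ (?ks!l) * B $ (?ks!l) $ (?ks!j))"
    using i' j' by (simp add: scalar_prod_def atLeast0LessThan)
  also have "\<dots> = (\<Sum>k\<in>K. A $ (?ks!i) $ k * B $ k $ (?ks!j))"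
    using sum.reindex_bij_betw[OF ks_bij[of K], of "\<lambda>k. A $ (?ks!i) $ k * B $ k $ (?ks!j)"] by simp
  also have "\<dots> = (\<Sum>k\<in>UNIV. A $ (?ks!i) $ k * B $ k $ (?ks!j))"
    using A ks_facts(4)[OF i'] by (intro sum.mono_neutral_left) auto
  also have "\<dots> = Rm K (A ** B) $$ (i, j)"
    using i' j' by (simp add: matrix_matrix_mult_def)
  finally show "Rm K (A ** B) $$ (i, j) = (Rm K A * Rm K B) $$ (i, j)" by simp
qed auto

lemma Rm_idm: "Rm K idm = 1\<^sub>m (card K)"
proof (rule eq_matI)
  fix i j assume "i < dim_row (1\<^sub>m (card K))" "j < dim_col (1\<^sub>m (card K))"
  hence "i < card K" "j < card K" by auto
  thus "Rm K idm $$ (i, j) = 1\<^sub>m (card K) $$ (i, j)"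
    using ks_facts(3)[of K] by (auto simp: Finite_Cartesian_Product.mat_def nth_eq_iff_index_eq ks_facts(1))
qed auto

lemma order_prod_linear:
  "order z (\<Prod>x\<leftarrow>xs. [:- x, 1:]) = count_list xs (z::complex)"
proof (induction xs)
  case Nil
  then show ?case by (simp add: order_0I)
next
  case (Cons x xs)
  have "0 \<notin> set (map (\<lambda>x. [:- x, 1:]) xs)" by auto
  hence nz: "(\<Prod>x\<leftarrow>xs. [:- x, 1:]) \<noteq> (0::complex poly)"
    using prod_list_zero_iff[of "map (\<lambda>x. [:- x, 1:]) xs"] by metis
  have "order z ([:- x, 1:] * (\<Prod>x\<leftarrow>xs. [:- x, 1:])) = order z [:- x, 1:] + order z (\<Prod>x\<leftarrow>xs. [:- x, 1:])"
  proof (rule order_mult)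
    have "[:- x, 1:] \<noteq> (0::complex poly)" by simp
    thus "[:- x, 1:] * (\<Prod>x\<leftarrow>xs. [:- x, 1:]) \<noteq> 0" using nz by (simp only: mult_eq_0_iff) simp
  qed
  then show ?case using Cons by (simp add: order_linear')
qed

lemma poly_prod_linear_zero:
  "poly (\<Prod>x\<leftarrow>xs. [:- x, 1:]) z = 0 \<longleftrightarrow> (z::complex) \<in> set xs"
  by (induction xs) auto

lemma length_filter_sum_count:
  "length (filter Q xs) = (\<Sum>z\<in>{z \<in> set xs. Q z}. count_list xs z)"
proof -
  have "length (filter Q xs) = size (filter_mset Q (mset xs))"
    by (metis mset_filter size_mset)
  also have "\<dots> = (\<Sum>z\<in>set_mset (filter_mset Q (mset xs)). count (filter_mset Q (mset xs)) z)"
    by (rule size_multiset_overloaded_eq)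
  also have "\<dots> = (\<Sum>z\<in>{z \<in> set xs. Q z}. count_list xs z)"
    by (intro sum.cong) (auto simp: count_mset)
  finally show ?thesis .
qed

lemma counts_diag_list:
  fixes cs :: "complex list"
  assumes P: "P = (\<Prod>x\<leftarrow>cs. [:- x, 1:])"
  shows "order 0 P = length (filter (\<lambda>z. z = 0) cs)"
    "(\<Sum>a \<in> {a. poly P a = 0 \<and> Im a = 0 \<and> Re a > 0}. order a P) = length (filter (\<lambda>z. Im z = 0 \<and> Re z > 0) cs)"
    "(\<Sum>a \<in> {a. poly P a = 0 \<and> Im a = 0 \<and> Re a < 0}. order a P) = length (filter (\<lambda>z. Im z = 0 \<and> Re z < 0) cs)"
proof -
  show "order 0 P = length (filter (\<lambda>z. z = 0) cs)"
    unfolding P order_prod_linear count_list_eq_length_filter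
    by (rule arg_cong[where f=length], rule filter_cong) auto
  show "(\<Sum>a \<in> {a. poly P a = 0 \<and> Im a = 0 \<and> Re a > 0}. order a P) = length (filter (\<lambda>z. Im z = 0 \<and> Re z > 0) cs)"
    unfolding length_filter_sum_count P order_prod_linear poly_prod_linear_zero by (intro sum.cong) auto
  show "(\<Sum>a \<in> {a. poly P a = 0 \<and> Im a = 0 \<and> Re a < 0}. order a P) = length (filter (\<lambda>z. Im z = 0 \<and> Re z < 0) cs)"
    unfolding length_filter_sum_count P order_prod_linear poly_prod_linear_zero by (intro sum.cong) auto
qed


lemma card_ks:
  fixes K :: "'n::{finite,linorder} set"
  shows "card {i. i < card K \<and> P (sorted_list_of_set K ! i)} = card {k \<in> K. P k}"
proof -
  have "bij_betw (\<lambda>i. sorted_list_of_set K ! i) {i. i < card K \<and> P (sorted_list_of_set K ! i)} {k \<in> K. P k}"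
  proof (rule bij_betw_subset[OF ks_bij])
    show "{i. i < card K \<and> P (sorted_list_of_set K ! i)} \<subseteq> {..<card K}" by auto
    show "(\<lambda>i. sorted_list_of_set K ! i) ` {i. i < card K \<and> P (sorted_list_of_set K ! i)} = {k \<in> K. P k}"
    proof
      show "(\<lambda>i. sorted_list_of_set K ! i) ` {i. i < card K \<and> P (sorted_list_of_set K ! i)} \<subseteq> {k \<in> K. P k}"
        using ks_facts(4) by auto
      show "{k \<in> K. P k} \<subseteq> (\<lambda>i. sorted_list_of_set K ! i) ` {i. i < card K \<and> P (sorted_list_of_set K ! i)}"
      proof
        fix k assume "k \<in> {k \<in> K. P k}"
        hence "k \<in> set (sorted_list_of_set K)" "P k" using ks_facts(2) by auto
        then obtain i where "i < length (sorted_list_of_set K)" "sorted_list_of_set K ! i = k"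
          by (metis in_set_conv_nth)
        thus "k \<in> (\<lambda>i. sorted_list_of_set K ! i) ` {i. i < card K \<and> P (sorted_list_of_set K ! i)}"
          using \<open>P k\<close> ks_facts(1) by force
      qed
    qed
  qed
  thus ?thesis by (rule bij_betw_same_card)
qed

lemma ublock_zero: "ublock K U \<Longrightarrow> r \<in> K \<Longrightarrow> j \<notin> K \<Longrightarrow> U$r$j = 0"
  unfolding ublock_def by (metis)

lemma counts_decomp:
  fixes K :: "'n::{finite,linorder} set" and a :: "'n \<Rightarrow> real"
  assumes U: "unitary U" and b: "ublock K U"
    and B: "B = U ** diagm (\<lambda>i. complex_of_real (a i)) ** adj_mat U"
  shows "n_zero_eig (Rm K B) = card {k \<in> K. a k = 0}"
    "n_pos_eig (Rm K B) = card {k \<in> K. a k > 0}"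
    "n_neg_eig (Rm K B) = card {k \<in> K. a k < 0}"
proof -
  define D where "D = diagm (\<lambda>i. complex_of_real (a i))"
  let ?m = "card K"
  let ?ks = "sorted_list_of_set K"
  have z1: "U$r$j = 0" if "r \<in> K" "j \<notin> K" for r j using ublock_zero[OF b that] .
  have z2: "adj_mat U $r$j = 0" if "r \<in> K" "j \<notin> K" for r j
    using b that unfolding ublock_def by auto
  have z3: "(U ** D)$r$j = 0" if "r \<in> K" "j \<notin> K" for r j
    using z1[OF that] by (simp add: matrix_matrix_mult_def D_def mult_ifz)
  have RB: "Rm K B = Rm K U * Rm K D * Rm K (adj_mat U)"
    unfolding B D_def[symmetric] using z1 z3 by (simp add: Rm_mult)
  have PQ: "Rm K U * Rm K (adj_mat U) = 1\<^sub>m ?m"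
    using z1 unitary_right[OF U] by (simp add: Rm_mult[symmetric] Rm_idm)
  have QP: "Rm K (adj_mat U) * Rm K U = 1\<^sub>m ?m"
    using z2 U by (simp add: Rm_mult[symmetric] Rm_idm unitary_def)
  have "similar_mat_wit (Rm K B) (Rm K D) (Rm K U) (Rm K (adj_mat U))"
    unfolding similar_mat_wit_def Let_def using RB PQ QP by auto
  hence cp: "char_poly (Rm K B) = char_poly (Rm K D)"
    by (intro char_poly_similar) (auto simp: similar_mat_def)
  have ut: "upper_triangular (Rm K D)"
    unfolding upper_triangular_def
    using ks_facts(3)[of K] by (auto simp: D_def nth_eq_iff_index_eq ks_facts(1))
  have cpD: "char_poly (Rm K D) = (\<Prod>x\<leftarrow>map (\<lambda>i. complex_of_real (a (?ks ! i))) [0..<?m]. [:- x, 1:])"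
  proof -
    have "diag_mat (Rm K D) = map (\<lambda>i. complex_of_real (a (?ks ! i))) [0..<?m]"
      unfolding diag_mat_def by (intro map_cong) (auto simp: D_def)
    thus ?thesis using char_poly_upper_triangular[OF Rm_carrier ut] by simp
  qed
  define cs where "cs = map (\<lambda>i. complex_of_real (a (?ks ! i))) [0..<?m]"
  have lf: "length (filter Q cs) = card {k \<in> K. Q (complex_of_real (a k))}" for Q
  proof -
    have "{i. i < length cs \<and> Q (cs ! i)} = {i. i < ?m \<and> Q (complex_of_real (a (?ks ! i)))}"
      by (auto simp: cs_def)
    thus ?thesis unfolding length_filter_conv_card using card_ks[of K "\<lambda>k. Q (complex_of_real (a k))"]
      by simp
  qed
  note cnt = counts_diag_list[OF cpD[unfolded cs_def[symmetric]]]
  show "n_zero_eig (Rm K B) = card {k \<in> K. a k = 0}"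
    unfolding n_zero_eig_def cp cnt lf by simp
  show "n_pos_eig (Rm K B) = card {k \<in> K. a k > 0}"
    unfolding n_pos_eig_def cp cnt lf by simp
  show "n_neg_eig (Rm K B) = card {k \<in> K. a k < 0}"
    unfolding n_neg_eig_def cp cnt lf by simp
qed

lemma cont_mm:
  fixes f g :: "real \<Rightarrow> complex^'n^'n"
  assumes "continuous_on S f" "continuous_on S g"
  shows "continuous_on S (\<lambda>t. f t ** g t)"
  unfolding matrix_matrix_mult_def
  by (intro continuous_on_vec_lambda continuous_on_sum continuous_on_mult continuous_on_component assms)

lemma cont_adj:
  fixes f :: "real \<Rightarrow> complex^'n^'n"
  assumes "continuous_on S f"
  shows "continuous_on S (\<lambda>t. adj_mat (f t))"
  unfolding adj_mat_def
  by (intro continuous_on_vec_lambda continuous_on_cnj continuous_on_component assms)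

lemma cont_diagm:
  assumes "\<And>i. continuous_on S (h i)"
  shows "continuous_on S (\<lambda>t. diagm (\<lambda>i. h i t))"
  unfolding diagm_def
proof (intro continuous_on_vec_lambda)
  fix i j show "continuous_on S (\<lambda>x. if i = j then h i x else 0)"
    by (cases "i = j") (simp_all add: assms)
qed

definition cnt :: "'n set \<Rightarrow> ('n \<Rightarrow> real) \<Rightarrow> nat \<times> nat \<times> nat" where
  "cnt K a = (card {k \<in> K. a k = 0}, card {k \<in> K. a k > 0}, card {k \<in> K. a k < 0})"

definition Gset :: "'n set \<Rightarrow> nat \<times> nat \<times> nat \<Rightarrow> (complex^'n^'n) set" where
  "Gset K c = {B. \<exists>U a. unitary U \<and> ublock K U \<and> (\<forall>i. i \<notin> K \<longrightarrow> a i = 0) \<and>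
      B = U ** diagm (\<lambda>i. complex_of_real (a i)) ** adj_mat U \<and> cnt K a = c}"

lemma GsetI:
  "unitary U \<Longrightarrow> ublock K U \<Longrightarrow> (\<And>i. i \<notin> K \<Longrightarrow> a i = 0) \<Longrightarrow> cnt K a = c \<Longrightarrow>
   U ** diagm (\<lambda>i. complex_of_real (a i)) ** adj_mat U \<in> Gset K c"
  unfolding Gset_def by blast

lemma unitary_idm: "unitary idm"
  by (simp add: unitary_def)

lemma ublock_idm: "ublock K idm"
  by (simp add: ublock_def Finite_Cartesian_Product.mat_def)

lemma ublock_mult: "ublock K A \<Longrightarrow> ublock K B \<Longrightarrow> ublock K (A ** B)"
  unfolding ublock_def matrix_matrix_mult_def
  by (auto simp: ifz_mult mult_ifz cong: if_cong)

lemma ublock_adj: "ublock K A \<Longrightarrow> ublock K (adj_mat A)"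
  unfolding ublock_def by auto

lemma ublock_diagm: "(\<And>i. i \<notin> K \<Longrightarrow> f i = 1) \<Longrightarrow> ublock K (diagm f)"
  unfolding ublock_def by auto

lemma sgn_path_cnt:
  fixes a :: "'n \<Rightarrow> real"
  assumes t: "0 \<le> t" "t \<le> 1"
  shows "cnt K (\<lambda>i. (1 - t) * a i + t * sgn (a i)) = cnt K a"
proof -
  have "((1 - t) * x + t * sgn x = 0 \<longleftrightarrow> x = 0) \<and> ((1 - t) * x + t * sgn x > 0 \<longleftrightarrow> x > 0)
      \<and> ((1 - t) * x + t * sgn x < 0 \<longleftrightarrow> x < 0)" for x :: real
  proof -
    consider "x = 0" | "x > 0" | "x < 0" by linarith
    thus ?thesis
    proof cases
      case 2
      have "(1 - t) * x \<ge> 0" using t 2 by simp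
      moreover have "(1 - t) * x + t > 0"
        using t 2 by (cases "t = 0") (auto intro: add_nonneg_pos add_pos_nonneg)
      ultimately show ?thesis using 2 by (simp add: sgn_if)
    next
      case 3
      have "(1 - t) * x \<le> 0" using t 3 by (intro mult_nonneg_nonpos) auto
      hence "(1 - t) * x + t * (-1) < 0"
        using t 3 by (cases "t = 0") auto
      thus ?thesis using 3 by (simp add: sgn_if)
    qed simp
  qed
  thus ?thesis unfolding cnt_def by simp
qed

lemma path_P1:
  assumes U: "unitary U" "ublock K U" and a0: "\<And>i. i \<notin> K \<Longrightarrow> a i = 0" and c: "cnt K a = c"
  shows "path_component (Gset K c) (U ** diagm (\<lambda>i. complex_of_real (a i)) ** adj_mat U)
           (U ** diagm (\<lambda>i. complex_of_real (sgn (a i))) ** adj_mat U)"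
proof -
  define g where "g t = U ** diagm (\<lambda>i. complex_of_real ((1 - t) * a i + t * sgn (a i))) ** adj_mat U" for t
  have "path g" unfolding path_def g_def
    by (intro cont_mm cont_diagm continuous_intros)
  moreover have "path_image g \<subseteq> Gset K c"
  proof
    fix B assume "B \<in> path_image g"
    then obtain t where t: "t \<in> {0..1}" "B = g t" by (auto simp: path_image_def)
    show "B \<in> Gset K c" unfolding t g_def
      by (rule GsetI[OF U]) (use t a0 sgn_path_cnt c in auto)
  qed
  moreover have "pathstart g = U ** diagm (\<lambda>i. complex_of_real (a i)) ** adj_mat U"
    by (simp add: pathstart_def g_def)
  moreover have "pathfinish g = U ** diagm (\<lambda>i. complex_of_real (sgn (a i))) ** adj_mat U"
    by (simp add: pathfinish_def g_def)
  ultimately show ?thesis unfolding path_component_def by blast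
qed


lemma perm_diag:
  fixes s1 s2 :: "'n::finite \<Rightarrow> real"
  assumes v1: "\<And>i. s1 i \<in> {-1, 0, 1}" and v2: "\<And>i. s2 i \<in> {-1, 0, 1}"
    and z1: "\<And>i. i \<notin> K \<Longrightarrow> s1 i = 0" and z2: "\<And>i. i \<notin> K \<Longrightarrow> s2 i = 0"
    and c: "cnt K s1 = cnt K s2"
  shows "\<exists>P. unitary P \<and> ublock K P \<and>
    diagm (\<lambda>i. complex_of_real (s1 i)) = P ** diagm (\<lambda>i. complex_of_real (s2 i)) ** adj_mat P"
proof -
  define Z1 where "Z1 = {k \<in> K. s1 k = 0}"
  define P1 where "P1 = {k \<in> K. s1 k > 0}"
  define N1 where "N1 = {k \<in> K. s1 k < 0}"
  define Z2 where "Z2 = {k \<in> K. s2 k = 0}"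
  define P2 where "P2 = {k \<in> K. s2 k > 0}"
  define N2 where "N2 = {k \<in> K. s2 k < 0}"
  have cards: "card Z2 = card Z1" "card P2 = card P1" "card N2 = card N1"
    using c by (auto simp: cnt_def Z1_def P1_def N1_def Z2_def P2_def N2_def)
  obtain hz where hz: "bij_betw hz Z2 Z1" using finite_same_card_bij[OF _ _ cards(1)] by auto
  obtain hp where hp: "bij_betw hp P2 P1" using finite_same_card_bij[OF _ _ cards(2)] by auto
  obtain hn where hn: "bij_betw hn N2 N1" using finite_same_card_bij[OF _ _ cards(3)] by auto
  define \<sigma> where "\<sigma> i = (if i \<in> Z2 then hz i else if i \<in> P2 then hp i else if i \<in> N2 then hn i else i)" for i
  have b1: "bij_betw \<sigma> Z2 Z1" using hz by (rule bij_betw_cong[THEN iffD1, rotated]) (simp add: \<sigma>_def)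
  have b2: "bij_betw \<sigma> P2 P1" using hp
    by (rule bij_betw_cong[THEN iffD1, rotated]) (auto simp: \<sigma>_def Z2_def P2_def)
  have b3: "bij_betw \<sigma> N2 N1" using hn
    by (rule bij_betw_cong[THEN iffD1, rotated]) (auto simp: \<sigma>_def Z2_def P2_def N2_def)
  have b4: "bij_betw \<sigma> (-K) (-K)"
    by (rule bij_betw_cong[THEN iffD1, of _ id]) (auto simp: \<sigma>_def Z2_def P2_def N2_def)
  have "bij_betw \<sigma> (Z2 \<union> P2 \<union> N2 \<union> -K) (Z1 \<union> P1 \<union> N1 \<union> -K)"
    by (intro bij_betw_combine b1 b2 b3 b4) (auto simp: Z1_def P1_def N1_def)
  moreover have "Z2 \<union> P2 \<union> N2 \<union> -K = UNIV" "Z1 \<union> P1 \<union> N1 \<union> -K = UNIV"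
    by (auto simp: Z1_def P1_def N1_def Z2_def P2_def N2_def)
  ultimately have bs: "bij \<sigma>" by simp
  have sK: "\<sigma> j \<in> K" if "j \<in> K" for j
  proof -
    have "j \<in> Z2 \<or> j \<in> P2 \<or> j \<in> N2" using that by (auto simp: Z2_def P2_def N2_def)
    thus ?thesis using bij_betwE[OF b1] bij_betwE[OF b2] bij_betwE[OF b3]
      by (auto simp: Z1_def P1_def N1_def)
  qed
  have sK': "\<sigma> j = j" if "j \<notin> K" for j using that by (auto simp: \<sigma>_def Z2_def P2_def N2_def)
  have sv: "s1 (\<sigma> j) = s2 j" for j
  proof (cases "j \<in> K")
    case False thus ?thesis using sK' z1 z2 by simp
  next
    case True
    hence "j \<in> Z2 \<or> j \<in> P2 \<or> j \<in> N2" by (auto simp: Z2_def P2_def N2_def)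
    moreover have "s1 (\<sigma> j) = 0" if "j \<in> Z2" using bij_betwE[OF b1] that by (auto simp: Z1_def)
    moreover have "s1 (\<sigma> j) > 0" if "j \<in> P2" using bij_betwE[OF b2] that by (auto simp: P1_def)
    moreover have "s1 (\<sigma> j) < 0" if "j \<in> N2" using bij_betwE[OF b3] that by (auto simp: N1_def)
    ultimately show ?thesis using v1[of "\<sigma> j"] v2[of j] by (auto simp: Z2_def P2_def N2_def)
  qed
  have inj: "\<sigma> i = \<sigma> j \<longleftrightarrow> i = j" for i j using bs by (auto simp: bij_def inj_def)
  define P :: "complex^'n^'n" where "P = (\<chi> r j. if r = \<sigma> j then 1 else 0)"
  have PU: "unitary P"
    unfolding unitary_def
    by (simp add: P_def cvec_eq_iff matrix_matrix_mult_def Finite_Cartesian_Product.mat_def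
        ifz_mult mult_ifz inj if_distrib[where f = cnj] cong: if_cong)
  have Pb: "ublock K P"
    unfolding ublock_def P_def using sK sK' by auto
  have comm: "diagm (\<lambda>i. complex_of_real (s1 i)) ** P = P ** diagm (\<lambda>i. complex_of_real (s2 i))"
    by (auto simp: P_def cvec_eq_iff matrix_matrix_mult_def ifz_mult mult_ifz sv)
  have "diagm (\<lambda>i. complex_of_real (s1 i)) = diagm (\<lambda>i. complex_of_real (s1 i)) ** (P ** adj_mat P)"
    using unitary_right[OF PU] by simp
  also have "\<dots> = P ** diagm (\<lambda>i. complex_of_real (s2 i)) ** adj_mat P"
    by (simp add: matrix_mul_assoc comm)
  finally show ?thesis using PU Pb by blast
qed

lemma unitary_conj_diag:
  assumes V: "unitary V" and e: "\<And>i. cnj (e i) * e i = 1"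
  shows "unitary (V ** diagm e ** adj_mat V)"
proof -
  have r1: "(X ** adj_mat V) ** V = X" for X
    by (metis V matrix_mul_assoc matrix_mul_rid unitary_def)
  have r2: "(X ** diagm a) ** diagm b = X ** diagm (\<lambda>i. a i * b i)" for X a b
    by (metis diagm_mult matrix_mul_assoc)
  show ?thesis
    unfolding unitary_def
    by (simp add: adj_mult adj_diagm matrix_mul_assoc r1 r2 e diagm_one unitary_right[OF V])
qed

lemma path_P3:
  fixes W :: "complex^'n::finite^'n" and s :: "'n \<Rightarrow> real"
  assumes W: "unitary W" "ublock K W" and s0: "\<And>i. i \<notin> K \<Longrightarrow> s i = 0" and c: "cnt K s = c"
  shows "path_component (Gset K c) (diagm (\<lambda>i. complex_of_real (s i)))
           (W ** diagm (\<lambda>i. complex_of_real (s i)) ** adj_mat W)"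
proof -
  obtain V \<mu> where V: "unitary V" "ublock K V" and mu1: "\<And>i. cmod (\<mu> i) = 1"
    and muK: "\<And>i. i \<notin> K \<Longrightarrow> \<mu> i = 1" and Wd: "W = V ** diagm \<mu> ** adj_mat V"
    using unitary_spectral[OF W] by blast
  define \<theta> where "\<theta> i = Arg (\<mu> i)" for i
  define Wt where "Wt t = V ** diagm (\<lambda>i. cis (t * \<theta> i)) ** adj_mat V" for t
  have Wtu: "unitary (Wt t)" for t
    unfolding Wt_def by (rule unitary_conj_diag[OF V(1)]) (simp add: cis_cnj cis_mult)
  have Wtb: "ublock K (Wt t)" for t
    unfolding Wt_def using V(2) muK
    by (intro ublock_mult ublock_adj ublock_diagm) (auto simp: \<theta>_def)
  have mu: "cis (\<theta> i) = \<mu> i" for i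
  proof -
    have "\<mu> i \<noteq> 0" using mu1[of i] by auto
    hence "cis (\<theta> i) = sgn (\<mu> i)" by (simp add: \<theta>_def cis_Arg)
    thus ?thesis using mu1[of i] by (simp add: sgn_div_norm)
  qed
  have W1: "Wt 1 = W" by (simp add: Wt_def Wd mu)
  have W0: "Wt 0 = idm" by (simp add: Wt_def diagm_one unitary_right[OF V(1)])
  define g where "g t = Wt t ** diagm (\<lambda>i. complex_of_real (s i)) ** adj_mat (Wt t)" for t
  have "path g" unfolding path_def g_def Wt_def
    by (intro cont_mm cont_adj cont_diagm continuous_intros)
  moreover have "path_image g \<subseteq> Gset K c"
    unfolding path_image_def g_def using Wtu Wtb s0 c by (auto intro!: GsetI)
  moreover have "pathstart g = diagm (\<lambda>i. complex_of_real (s i))"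
    by (simp add: pathstart_def g_def W0)
  moreover have "pathfinish g = W ** diagm (\<lambda>i. complex_of_real (s i)) ** adj_mat W"
    by (simp add: pathfinish_def g_def W1)
  ultimately show ?thesis unfolding path_component_def by blast
qed

lemma Gset_path_connected: "path_connected (Gset (K::'n::finite set) c)"
  unfolding path_connected_component
proof (intro ballI)
  fix B1 B2 assume B1: "B1 \<in> Gset K c" and B2: "B2 \<in> Gset K c"
  obtain U1 a1 where U1: "unitary U1" "ublock K U1" and a1: "\<And>i. i \<notin> K \<Longrightarrow> a1 i = 0"
    and B1d: "B1 = U1 ** diagm (\<lambda>i. complex_of_real (a1 i)) ** adj_mat U1" and c1: "cnt K a1 = c"
    using B1 unfolding Gset_def by blast
  obtain U2 a2 where U2: "unitary U2" "ublock K U2" and a2: "\<And>i. i \<notin> K \<Longrightarrow> a2 i = 0"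
    and B2d: "B2 = U2 ** diagm (\<lambda>i. complex_of_real (a2 i)) ** adj_mat U2" and c2: "cnt K a2 = c"
    using B2 unfolding Gset_def by blast
  define s1 where "s1 i = sgn (a1 i)" for i
  define s2 where "s2 i = sgn (a2 i)" for i
  have s1e: "s1 = (\<lambda>i. sgn (a1 i))" and s2e: "s2 = (\<lambda>i. sgn (a2 i))" by (auto simp: s1_def s2_def)
  have cs1: "cnt K s1 = c" using sgn_path_cnt[of 1 K a1] c1 by (simp add: s1e)
  have cs2: "cnt K s2 = c" using sgn_path_cnt[of 1 K a2] c2 by (simp add: s2e)
  have s10: "\<And>i. i \<notin> K \<Longrightarrow> s1 i = 0" using a1 by (simp add: s1_def)
  have s20: "\<And>i. i \<notin> K \<Longrightarrow> s2 i = 0" using a2 by (simp add: s2_def)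
  obtain P where P: "unitary P" "ublock K P"
    and Pd: "diagm (\<lambda>i. complex_of_real (s1 i)) = P ** diagm (\<lambda>i. complex_of_real (s2 i)) ** adj_mat P"
  proof -
    have v1: "\<And>i. s1 i \<in> {-1, 0, 1}" and v2: "\<And>i. s2 i \<in> {-1, 0, 1}"
      by (auto simp: s1_def s2_def sgn_if)
    have "cnt K s1 = cnt K s2" using cs1 cs2 by simp
    from perm_diag[OF v1 v2 s10 s20 this] obtain P0 where
      h: "unitary P0 \<and> ublock K P0 \<and> diagm (\<lambda>i. complex_of_real (s1 i)) = P0 ** diagm (\<lambda>i. complex_of_real (s2 i)) ** adj_mat P0"
      by (rule exE)
    show ?thesis by (rule that[OF conjunct1[OF h] conjunct1[OF conjunct2[OF h]] conjunct2[OF conjunct2[OF h]]])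
  qed
  have p1: "path_component (Gset K c) B1 (U1 ** diagm (\<lambda>i. complex_of_real (s1 i)) ** adj_mat U1)"
    unfolding B1d s1_def using path_P1[OF U1 a1 c1] .
  have e: "U1 ** diagm (\<lambda>i. complex_of_real (s1 i)) ** adj_mat U1
      = (U1 ** P) ** diagm (\<lambda>i. complex_of_real (s2 i)) ** adj_mat (U1 ** P)"
    unfolding Pd by (simp add: adj_mult matrix_mul_assoc)
  have p2: "path_component (Gset K c) (diagm (\<lambda>i. complex_of_real (s2 i))) (U1 ** diagm (\<lambda>i. complex_of_real (s1 i)) ** adj_mat U1)"
    unfolding e by (rule path_P3[OF unitary_mult[OF U1(1) P(1)] ublock_mult[OF U1(2) P(2)] s20 cs2])
  have p3: "path_component (Gset K c) (diagm (\<lambda>i. complex_of_real (s2 i))) (U2 ** diagm (\<lambda>i. complex_of_real (s2 i)) ** adj_mat U2)"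
    by (rule path_P3[OF U2 s20 cs2])
  have p4: "path_component (Gset K c) B2 (U2 ** diagm (\<lambda>i. complex_of_real (s2 i)) ** adj_mat U2)"
    unfolding B2d s2_def using path_P1[OF U2 a2 c2] .
  show "path_component (Gset K c) B1 B2"
    using path_component_trans[OF path_component_trans[OF path_component_trans[OF p1 path_component_sym[OF p2]] p3]
        path_component_sym[OF p4]] .
qed

section \<open>Quotient topology\<close>

lemma istopology_quotient:
  "istopology (\<lambda>U. U \<subseteq> f ` topspace X \<and> openin X {x \<in> topspace X. f x \<in> U})"
  unfolding istopology_def
proof (rule conjI; intro allI impI)
  fix S T
  assume S: "S \<subseteq> f ` topspace X \<and> openin X {x \<in> topspace X. f x \<in> S}"
    and T: "T \<subseteq> f ` topspace X \<and> openin X {x \<in> topspace X. f x \<in> T}"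
  have "{x \<in> topspace X. f x \<in> S \<inter> T} = {x \<in> topspace X. f x \<in> S} \<inter> {x \<in> topspace X. f x \<in> T}" by auto
  thus "S \<inter> T \<subseteq> f ` topspace X \<and> openin X {x \<in> topspace X. f x \<in> S \<inter> T}"
    using S T by (auto intro: openin_Int)
next
  fix \<K> assume K: "\<forall>K\<in>\<K>. K \<subseteq> f ` topspace X \<and> openin X {x \<in> topspace X. f x \<in> K}"
  have "{x \<in> topspace X. f x \<in> \<Union>\<K>} = \<Union>((\<lambda>K. {x \<in> topspace X. f x \<in> K}) ` \<K>)" by auto
  thus "\<Union>\<K> \<subseteq> f ` topspace X \<and> openin X {x \<in> topspace X. f x \<in> \<Union>\<K>}"
    using K by (auto intro!: openin_Union)
qed

lemma openin_quotient:
  "openin (quotient_topology X f) U \<longleftrightarrow> U \<subseteq> f ` topspace X \<and> openin X {x \<in> topspace X. f x \<in> U}"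
  unfolding quotient_topology_def topology_inverse'[OF istopology_quotient] by simp

lemma topspace_quotient: "topspace (quotient_topology X f) = f ` topspace X"
proof
  show "topspace (quotient_topology X f) \<subseteq> f ` topspace X"
    unfolding topspace_def openin_quotient by auto
  have "{x \<in> topspace X. f x \<in> f ` topspace X} = topspace X" by auto
  hence "openin (quotient_topology X f) (f ` topspace X)"
    unfolding openin_quotient by auto
  thus "f ` topspace X \<subseteq> topspace (quotient_topology X f)"
    by (rule openin_subset)
qed

lemma topspace_BC: "topspace BC_top = orbit_cls ` B_pre"
  unfolding BC_top_def topspace_quotient by simp

lemma openin_BC: "openin BC_top U \<longleftrightarrow> U \<subseteq> orbit_cls ` B_pre \<and> openin (top_of_set B_pre) {p \<in> B_pre. orbit_cls p \<in> U}"
  unfolding BC_top_def openin_quotient by simp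

lemma invertible_idm: "invertible (idm :: complex^'n^'n)"
  unfolding invertible_def by (intro exI[of _ idm]) simp

lemma orbit_self: "p \<in> orbit_cls p"
  unfolding orbit_cls_def using invertible_idm by (cases p) force

lemma orbit_eq:
  assumes "q \<in> orbit_cls p"
  shows "orbit_cls q = orbit_cls p"
proof -
  obtain T where T: "invertible T" and q: "q = (T ** fst p, T ** snd p)"
    using assms unfolding orbit_cls_def by blast
  obtain T' where T': "T ** T' = idm" "T' ** T = idm" using T unfolding invertible_def by blast
  have "invertible T'" unfolding invertible_def using T' by blast
  show ?thesis
  proof
    show "orbit_cls q \<subseteq> orbit_cls p"
    proof
      fix x assume "x \<in> orbit_cls q"
      then obtain S where S: "invertible S" and x: "x = (S ** (T ** fst p), S ** (T ** snd p))"
        unfolding orbit_cls_def q by auto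
      have "x = ((S ** T) ** fst p, (S ** T) ** snd p)" by (simp add: x matrix_mul_assoc)
      moreover have "invertible (S ** T)" using S T by (rule invertible_mult)
      ultimately show "x \<in> orbit_cls p" unfolding orbit_cls_def by auto
    qed
    show "orbit_cls p \<subseteq> orbit_cls q"
    proof
      fix x assume "x \<in> orbit_cls p"
      then obtain S where S: "invertible S" and x: "x = (S ** fst p, S ** snd p)"
        unfolding orbit_cls_def by blast
      have "x = ((S ** T') ** (T ** fst p), (S ** T') ** (T ** snd p))"
        using T' by (simp add: x matrix_mul_assoc) (metis matrix_mul_assoc matrix_mul_rid)
      moreover have "invertible (S ** T')" using S \<open>invertible T'\<close> by (rule invertible_mult)
      ultimately show "x \<in> orbit_cls q" unfolding orbit_cls_def q by auto
    qed
  qed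
qed


section \<open>Standard pairs\<close>

definition Apair :: "'n set \<Rightarrow> complex^'n^'n \<Rightarrow> complex^'n^'n" where
  "Apair K S = (\<chi> r i. if i \<in> K then (if r = i then -1 else 0) else S$r$i)"

definition Bpair :: "'n set \<Rightarrow> complex^'n^'n \<Rightarrow> complex^'n^'n" where
  "Bpair K S = (\<chi> r i. if i \<in> K then S$r$i else (if r = i then 1 else 0))"

lemma std_form_pair: "std_form K S (Apair K S) (Bpair K S)"
  unfolding std_form_def column_def by (auto simp: cvec_eq_iff Apair_def Bpair_def axis_def)

lemma std_form_unique:
  assumes "std_form K S A B"
  shows "A = Apair K S" "B = Bpair K S"
proof -
  have col: "A $ r $ i = column i A $ r" "B $ r $ i = column i B $ r" for r i
    by (simp_all add: column_def)
  show "A = Apair K S"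
  proof (rule iffD2[OF cvec_eq_iff], intro allI iffD2[OF cvec_eq_iff])
    fix r i show "A $ r $ i = Apair K S $ r $ i"
      using assms unfolding std_form_def col[of r i]
      by (cases "i \<in> K") (auto simp: Apair_def axis_def column_def)
  qed
  show "B = Bpair K S"
  proof (rule iffD2[OF cvec_eq_iff], intro allI iffD2[OF cvec_eq_iff])
    fix r i show "B $ r $ i = Bpair K S $ r $ i"
      using assms unfolding std_form_def col[of r i]
      by (cases "i \<in> K") (auto simp: Bpair_def axis_def column_def)
  qed
qed

lemma pair_inj:
  assumes "Apair K S = Apair K S'" "Bpair K S = Bpair K S'"
  shows "S = S'"
proof (rule iffD2[OF cvec_eq_iff], intro allI iffD2[OF cvec_eq_iff])
  fix r i
  have "Apair K S $ r $ i = Apair K S' $ r $ i" "Bpair K S $ r $ i = Bpair K S' $ r $ i"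
    using assms by simp_all
  thus "S $ r $ i = S' $ r $ i" by (cases "i \<in> K") (auto simp: Apair_def Bpair_def)
qed

lemma pair_rank:
  fixes K :: "'n::finite set" and S :: "complex^'n^'n"
  shows "rank (block_mat (Apair K S) (Bpair K S)) = CARD('n)"
proof -
  define M where "M = block_mat (Apair K S) (Bpair K S)"
  define rw where "rw r = Finite_Cartesian_Product.row r M" for r
  have Ml: "M $ r $ Inl i = (if i \<in> K then (if r = i then -1 else 0) else S$r$i)" for r i
    by (simp add: M_def block_mat_def Apair_def)
  have Mr: "M $ r $ Inr i = (if i \<in> K then S$r$i else (if r = i then 1 else 0))" for r i
    by (simp add: M_def block_mat_def Bpair_def)
  have rwn: "rw r $ j = M $ r $ j" for r j by (simp add: rw_def Finite_Cartesian_Product.row_def)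
  have rows: "Finite_Cartesian_Product.rows M = range rw" by (auto simp: Finite_Cartesian_Product.rows_def rw_def)
  have key: "c = (\<lambda>_. 0)" if "(\<Sum>r\<in>UNIV. c r *s rw r) = 0" for c :: "'n \<Rightarrow> complex"
  proof
    fix r0
    show "c r0 = 0"
    proof (cases "r0 \<in> K")
      case True
      have "(\<Sum>r\<in>UNIV. c r *s rw r) $ Inl r0 = 0" using that by simp
      moreover have "(\<Sum>r\<in>UNIV. c r *s rw r) $ Inl r0 = - c r0"
        using True by (simp add: sum_component rwn Ml mult_ifz)
      ultimately show ?thesis by simp
    next
      case False
      have "(\<Sum>r\<in>UNIV. c r *s rw r) $ Inr r0 = 0" using that by simp
      moreover have "(\<Sum>r\<in>UNIV. c r *s rw r) $ Inr r0 = c r0"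
        using False by (simp add: sum_component rwn Mr mult_ifz)
      ultimately show ?thesis by simp
    qed
  qed
  have inj: "inj rw"
  proof
    fix r1 r2 assume e: "rw r1 = rw r2"
    show "r1 = r2"
    proof (cases "r1 \<in> K")
      case True
      have "rw r1 $ Inl r1 = rw r2 $ Inl r1" using e by simp
      thus ?thesis using True by (simp add: rwn Ml split: if_splits)
    next
      case False
      have "rw r1 $ Inr r1 = rw r2 $ Inr r1" using e by simp
      thus ?thesis using False by (simp add: rwn Mr split: if_splits)
    qed
  qed
  have ind: "vec.independent (Finite_Cartesian_Product.rows M)"
  proof (rule vec.independent_if_scalars_zero)
    show "finite (Finite_Cartesian_Product.rows M)" unfolding rows by simp
    fix f x assume s: "(\<Sum>x\<in>Finite_Cartesian_Product.rows M. f x *s x) = 0" and x: "x \<in> Finite_Cartesian_Product.rows M"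
    have "(\<Sum>r\<in>UNIV. f (rw r) *s rw r) = 0"
      using s unfolding rows by (simp add: sum.reindex[OF inj])
    from key[OF this] have "f (rw r) = 0" for r by meson
    thus "f x = 0" using x unfolding rows by auto
  qed
  have "rank M = vec.dim (Finite_Cartesian_Product.rows M)" by (simp add: row_rank_def_gen)
  also have "\<dots> = card (Finite_Cartesian_Product.rows M)" by (rule vec.dim_eq_card_independent[OF ind])
  also have "\<dots> = CARD('n)" unfolding rows using inj by (simp add: card_image)
  finally show ?thesis unfolding M_def .
qed

lemma pair_herm_cond:
  assumes h: "hermitian_mat S"
  shows "Apair K S ** adj_mat (Bpair K S) = Bpair K S ** adj_mat (Apair K S)"
proof (rule iffD2[OF cvec_eq_iff], intro allI iffD2[OF cvec_eq_iff])
  fix r l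
  have hS: "cnj (S $ l $ r) = S $ r $ l" using h unfolding hermitian_mat_def
    by (metis adj_mat_nth)
  have "(Apair K S ** adj_mat (Bpair K S)) $ r $ l
      = (\<Sum>i\<in>UNIV. (if i = r then (if r \<in> K then - cnj (S$l$r) else 0) else 0)
                   + (if i = l then (if l \<notin> K then S$r$l else 0) else 0))"
    unfolding matrix_matrix_mult_def by (simp only: vec_lambda_beta, intro sum.cong refl) (auto simp: Apair_def Bpair_def)
  also have "\<dots> = (if r \<in> K then - S$r$l else 0) + (if l \<notin> K then S$r$l else 0)"
    by (simp add: sum.distrib hS)
  finally have L: "(Apair K S ** adj_mat (Bpair K S)) $ r $ l = (if r \<in> K then - S$r$l else 0) + (if l \<notin> K then S$r$l else 0)" .
  have "(Bpair K S ** adj_mat (Apair K S)) $ r $ l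
      = (\<Sum>i\<in>UNIV. (if i = l then (if l \<in> K then - S$r$l else 0) else 0)
                   + (if i = r then (if r \<notin> K then cnj (S$l$r) else 0) else 0))"
    unfolding matrix_matrix_mult_def by (simp only: vec_lambda_beta, intro sum.cong refl) (auto simp: Apair_def Bpair_def)
  also have "\<dots> = (if l \<in> K then - S$r$l else 0) + (if r \<notin> K then S$r$l else 0)"
    by (simp add: sum.distrib hS)
  finally have R: "(Bpair K S ** adj_mat (Apair K S)) $ r $ l = (if l \<in> K then - S$r$l else 0) + (if r \<notin> K then S$r$l else 0)" .
  show "(Apair K S ** adj_mat (Bpair K S)) $ r $ l = (Bpair K S ** adj_mat (Apair K S)) $ r $ l"
    unfolding L R by auto
qed

lemma pair_Bpre: "hermitian_mat S \<Longrightarrow> (Apair K S, Bpair K S) \<in> B_pre"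
  unfolding B_pre_def using pair_rank pair_herm_cond by auto

definition phi :: "'n set \<Rightarrow> complex^'n^'n \<Rightarrow> ((complex^'n^'n) \<times> (complex^'n^'n)) set" where
  "phi K S = orbit_cls (Apair K S, Bpair K S)"

lemma phi_top: "hermitian_mat S \<Longrightarrow> phi K S \<in> topspace BC_top"
  unfolding topspace_BC phi_def using pair_Bpre by blast

lemma phi_OK: "hermitian_mat S \<Longrightarrow> phi K S \<in> O_K K"
  unfolding O_K_def using phi_top[of S K] orbit_self[of "(Apair K S, Bpair K S)"] std_form_pair[of K S]
  by (auto simp: phi_def)

lemma orbit_pair_std:
  assumes AB: "(A, B) \<in> orbit_cls (Apair K S, Bpair K S)" and st: "std_form K S' A B"
  shows "S' = S"
proof -
  obtain T where T: "invertible T" and A: "A = T ** Apair K S" and B: "B = T ** Bpair K S"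
    using AB unfolding orbit_cls_def by auto
  have A': "A = Apair K S'" and B': "B = Bpair K S'" using std_form_unique[OF st] by auto
  have TI: "T = idm"
  proof (rule iffD2[OF cvec_eq_iff], intro allI iffD2[OF cvec_eq_iff])
    fix r i
    show "T $ r $ i = idm $ r $ i"
    proof (cases "i \<in> K")
      case True
      have "A $ r $ i = (T ** Apair K S) $ r $ i" using A by simp
      also have "\<dots> = - T $ r $ i"
        using True by (simp add: matrix_matrix_mult_def Apair_def mult_ifz)
      finally show ?thesis using A' True
        by (auto simp: Apair_def Finite_Cartesian_Product.mat_def split: if_splits)
    next
      case False
      have "B $ r $ i = (T ** Bpair K S) $ r $ i" using B by simp
      also have "\<dots> = T $ r $ i"
        using False by (simp add: matrix_matrix_mult_def Bpair_def mult_ifz)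
      finally show ?thesis using B' False
        by (auto simp: Bpair_def Finite_Cartesian_Product.mat_def split: if_splits)
    qed
  qed
  have "Apair K S = Apair K S'" "Bpair K S = Bpair K S'"
    using A A' B B' TI by simp_all
  thus ?thesis by (rule pair_inj[symmetric])
qed

lemma S_of_phi: "hermitian_mat S \<Longrightarrow> S_of K (phi K S) = S"
  unfolding S_of_def
proof (rule the_equality)
  assume "hermitian_mat S"
  thus "hermitian_mat S \<and> (\<exists>A B. (A, B) \<in> phi K S \<and> std_form K S A B)"
    using orbit_self[of "(Apair K S, Bpair K S)"] std_form_pair[of K S] by (auto simp: phi_def)
next
  fix S' assume "hermitian_mat S' \<and> (\<exists>A B. (A, B) \<in> phi K S \<and> std_form K S' A B)"
  thus "S' = S" using orbit_pair_std unfolding phi_def by blast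
qed

lemma S_K_phi: "hermitian_mat S \<Longrightarrow> S_K K (phi K S) = Rm K S"
  by (simp add: S_K_Rm S_of_phi)

definition Hset :: "'n::{finite,linorder} set \<Rightarrow> nat \<Rightarrow> nat \<Rightarrow> nat \<Rightarrow> 'n cmat set" where
  "Hset K n0 np nn = {S. hermitian_mat S \<and> n_zero_eig (Rm K S) = n0 \<and> n_pos_eig (Rm K S) = np \<and> n_neg_eig (Rm K S) = nn}"

lemma J_eq: "J_set K n0 np nn = phi K ` Hset K n0 np nn"
proof
  show "J_set K n0 np nn \<subseteq> phi K ` Hset K n0 np nn"
  proof
    fix c assume cJ: "c \<in> J_set K n0 np nn"
    hence cO: "c \<in> O_K K" by (simp add: J_set_def)
    then obtain A B S where AB: "(A, B) \<in> c" and h: "hermitian_mat S" and st: "std_form K S A B"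
      and ct: "c \<in> topspace BC_top"
      unfolding O_K_def by blast
    obtain p where p: "p \<in> B_pre" "c = orbit_cls p" using ct unfolding topspace_BC by blast
    have "c = orbit_cls (A, B)" using orbit_eq[of "(A, B)" p] AB p by simp
    also have "\<dots> = phi K S" using std_form_unique[OF st] by (simp add: phi_def)
    finally have c: "c = phi K S" .
    have "S \<in> Hset K n0 np nn"
      using cJ h unfolding J_set_def Hset_def c by (simp add: S_K_phi)
    thus "c \<in> phi K ` Hset K n0 np nn" using c by blast
  qed
  show "phi K ` Hset K n0 np nn \<subseteq> J_set K n0 np nn"
  proof
    fix c assume "c \<in> phi K ` Hset K n0 np nn"
    then obtain S where S: "S \<in> Hset K n0 np nn" and c: "c = phi K S" by blast
    have h: "hermitian_mat S" using S by (simp add: Hset_def)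
    show "c \<in> J_set K n0 np nn"
      using S unfolding J_set_def Hset_def c by (simp add: phi_OK[OF h] S_K_phi[OF h])
  qed
qed

lemma cont_pair: "continuous_on X (\<lambda>S. (Apair K S, Bpair K S))"
proof (intro continuous_on_Pair)
  show "continuous_on X (Apair K)"
    unfolding Apair_def
  proof (intro continuous_on_vec_lambda)
    fix r i show "continuous_on X (\<lambda>S. if i \<in> K then (if r = i then -1 else 0) else S $ r $ i)"
      by (cases "i \<in> K") (auto intro!: continuous_on_component continuous_on_id)
  qed
  show "continuous_on X (Bpair K)"
    unfolding Bpair_def
  proof (intro continuous_on_vec_lambda)
    fix r i show "continuous_on X (\<lambda>S. if i \<in> K then S $ r $ i else (if r = i then 1 else 0))"
      by (cases "i \<in> K") (auto intro!: continuous_on_component continuous_on_id)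
  qed
qed

lemma phi_cont:
  fixes K :: "'n::finite set"
  shows "continuous_map (top_of_set {S. hermitian_mat S}) BC_top (phi K)"
  unfolding continuous_map_def
proof (intro conjI allI impI)
  show "phi K \<in> topspace (top_of_set {S. hermitian_mat S}) \<rightarrow> topspace BC_top"
    using phi_top by auto
  fix U :: "((complex^'n^'n) \<times> (complex^'n^'n)) set set" assume "openin BC_top U"
  hence V: "openin (top_of_set B_pre) {p \<in> B_pre. orbit_cls p \<in> U}" by (simp add: openin_BC)
  have "openin (top_of_set {S. hermitian_mat S})
      ({S. hermitian_mat S} \<inter> (\<lambda>S. (Apair K S, Bpair K S)) -` {p \<in> B_pre. orbit_cls p \<in> U})"
    by (rule continuous_openin_preimage[OF cont_pair _ V]) (use pair_Bpre in auto)
  moreover have "{S. hermitian_mat S} \<inter> (\<lambda>S. (Apair K S, Bpair K S)) -` {p \<in> B_pre. orbit_cls p \<in> U}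
      = {x \<in> topspace (top_of_set {S. hermitian_mat S}). phi K x \<in> U}"
    using pair_Bpre by (auto simp: phi_def)
  ultimately show "openin (top_of_set {S. hermitian_mat S}) {x \<in> topspace (top_of_set {S. hermitian_mat S}). phi K x \<in> U}"
    by simp
qed


definition KS :: "'n set \<Rightarrow> complex^'n^'n \<Rightarrow> complex^'n^'n" where
  "KS K S = (\<chi> r s. if r \<in> K \<and> s \<in> K then S$r$s else 0)"

lemma herm_iff: "hermitian_mat M \<longleftrightarrow> (\<forall>r s. cnj (M$s$r) = M$r$s)"
  unfolding hermitian_mat_def by (auto simp: cvec_eq_iff)

lemma KS_herm: "hermitian_mat S \<Longrightarrow> hermitian_mat (KS K S)"
  unfolding herm_iff KS_def by auto

lemma KS_ksupp: "ksupp K (KS K S)"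
  unfolding ksupp_def KS_def by auto

lemma Rm_eqI: "(\<And>r s. r \<in> K \<Longrightarrow> s \<in> K \<Longrightarrow> A$r$s = B$r$s) \<Longrightarrow> Rm K A = Rm K B"
  by (rule eq_matI) (auto simp: ks_facts)

lemma Rm_KS: "Rm K (KS K S) = Rm K S"
  by (rule Rm_eqI) (simp add: KS_def)

lemma conj_herm:
  assumes "\<And>i. cnj (d i) = d i"
  shows "hermitian_mat (U ** diagm d ** adj_mat U)"
proof -
  have "adj_mat (diagm d) = diagm d" using assms by (simp add: adj_diagm)
  thus ?thesis unfolding hermitian_mat_def by (simp add: adj_mult matrix_mul_assoc)
qed

lemma Gset_props:
  fixes K :: "'n::{finite,linorder} set"
  assumes "B \<in> Gset K (n0, np, nn)"
  shows "hermitian_mat B" "n_zero_eig (Rm K B) = n0" "n_pos_eig (Rm K B) = np" "n_neg_eig (Rm K B) = nn"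
proof -
  obtain U a where U: "unitary U" "ublock K U" and B: "B = U ** diagm (\<lambda>i. complex_of_real (a i)) ** adj_mat U"
    and c: "cnt K a = (n0, np, nn)"
    using assms unfolding Gset_def by blast
  show "hermitian_mat B" unfolding B by (rule conj_herm) simp
  show "n_zero_eig (Rm K B) = n0" "n_pos_eig (Rm K B) = np" "n_neg_eig (Rm K B) = nn"
    using counts_decomp[OF U B] c by (simp_all add: cnt_def)
qed

lemma KS_Gset:
  fixes K :: "'n::{finite,linorder} set"
  assumes "S \<in> Hset K n0 np nn"
  shows "KS K S \<in> Gset K (n0, np, nn)"
proof -
  have h: "hermitian_mat S" using assms by (simp add: Hset_def)
  obtain U a where U: "unitary U" "ublock K U" and a0: "\<forall>i. i \<notin> K \<longrightarrow> a i = 0"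
    and D: "KS K S = U ** diagm (\<lambda>i. complex_of_real (a i)) ** adj_mat U"
    using herm_spectral[OF KS_herm[OF h] KS_ksupp] by blast
  have "cnt K a = (n0, np, nn)"
    using counts_decomp[OF U D] assms by (simp add: cnt_def Hset_def Rm_KS)
  thus ?thesis unfolding D using U a0 by (intro GsetI) auto
qed

lemma Hset_path_connected:
  fixes K :: "'n::{finite,linorder} set"
  shows "path_connected (Hset K n0 np nn)"
  unfolding path_connected_def
proof (intro ballI)
  fix S1 S2 assume S1: "S1 \<in> Hset K n0 np nn" and S2: "S2 \<in> Hset K n0 np nn"
  have h1: "hermitian_mat S1" and h2: "hermitian_mat S2" using S1 S2 by (auto simp: Hset_def)
  obtain g where g: "path g" "path_image g \<subseteq> Gset K (n0, np, nn)"
    "pathstart g = KS K S1" "pathfinish g = KS K S2"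
    using Gset_path_connected[of K "(n0, np, nn)"] KS_Gset[OF S1] KS_Gset[OF S2]
    unfolding path_connected_def by blast
  define h where "h t = g t + (1 - t) *\<^sub>R (S1 - KS K S1) + t *\<^sub>R (S2 - KS K S2)" for t
  have "path h" using g(1) unfolding path_def h_def by (intro continuous_intros)
  moreover have "path_image h \<subseteq> Hset K n0 np nn"
  proof
    fix x assume "x \<in> path_image h"
    then obtain t where t: "t \<in> {0..1}" and x: "x = h t" by (auto simp: path_image_def)
    have gt: "g t \<in> Gset K (n0, np, nn)" using g(2) t by (auto simp: path_image_def)
    note gp = Gset_props[OF gt]
    have "hermitian_mat x"
      using gp(1) h1 h2 unfolding herm_iff x h_def
      by (auto simp: KS_def complex_cnj_scaleR)
    moreover have "Rm K x = Rm K (g t)"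
      unfolding x h_def by (rule Rm_eqI) (simp add: KS_def)
    ultimately show "x \<in> Hset K n0 np nn" using gp by (simp add: Hset_def)
  qed
  moreover have "pathstart h = S1" using g(3) by (simp add: pathstart_def h_def)
  moreover have "pathfinish h = S2" using g(4) by (simp add: pathfinish_def h_def)
  ultimately show "\<exists>g. path g \<and> path_image g \<subseteq> Hset K n0 np nn \<and> pathstart g = S1 \<and> pathfinish g = S2"
    by blast
qed

theorem lemma7p3:
  fixes K :: "'n::{finite,linorder} set" and d n0 np :: nat
  assumes "CARD('n) = 2 * d" and "d \<ge> 2"
    and "K \<noteq> {}"
    and "n0 \<le> card K" and "np \<le> card K - n0"
  shows "path_connectedin (subtopology BC_top (O_K K)) (J_set K n0 np (card K - n0 - np))"
proof -
  let ?H = "Hset K n0 np (card K - n0 - np)"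
  have "path_connectedin (top_of_set {S. hermitian_mat S}) ?H"
    unfolding path_connectedin_subtopology path_connectedin_euclidean
    using Hset_path_connected by (auto simp: Hset_def)
  moreover have "continuous_map (top_of_set {S. hermitian_mat S}) (subtopology BC_top (O_K K)) (phi K)"
    unfolding continuous_map_in_subtopology using phi_cont phi_OK by auto
  ultimately have "path_connectedin (subtopology BC_top (O_K K)) (phi K ` ?H)"
    using path_connectedin_continuous_map_image by blast
  thus ?thesis by (simp add: J_eq)
qed

end
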